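(* Let $\alpha_1,\alpha_2,\beta_2,\beta_3,\beta_4,\delta_1,\delta_2,\delta_4>0$, $\rho>0$, and $i\in C(\mathbb{R}_+,[0,i_M])$ $\rho$-periodic with $\frac1\rho\int_0^\rho i=1$. Consider the system $$u_1'=u_1(1-u_1-\alpha_1u_2-\delta_1u_3),\quad u_2'=\beta_2u_2(1-u_2-\alpha_2u_1-\delta_2u_4),\quad u_3'=\beta_3(u_2-u_3),\quad u_4'=\beta_4(i(t)-u_4-\delta_4u_4u_2).$$ Let $w$ be the unique $\rho$-periodic solution of $w'=\beta_4(i(t)-w)$. Then $(1,0,0,w(t))$ is a $\rho$-periodic solution of the system; it is (uniformly) asymptotically stable if $\alpha_2+\delta_2>1$ and unstable if $\alpha_2+\delta_2<1$.
   Context: $\mathbb{R}_+=[0,\infty)$. Stability/instability is in the Lyapunov sense. *)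

theory Defs
  imports "HOL-Analysis.Analysis"
begin

type_synonym R4 = "real \<times> real \<times> real \<times> real"

definition sysF ::
  "real \<Rightarrow> real \<Rightarrow> real \<Rightarrow> real \<Rightarrow> real \<Rightarrow> real \<Rightarrow> real \<Rightarrow> real \<Rightarrow> (real \<Rightarrow> real)
   \<Rightarrow> real \<Rightarrow> R4 \<Rightarrow> R4" where
  "sysF a1 a2 b2 b3 b4 d1 d2 d4 i t u =
     (case u of (u1, u2, u3, u4) \<Rightarrow>
       (u1 * (1 - u1 - a1 * u2 - d1 * u3),
        b2 * u2 * (1 - u2 - a2 * u1 - d2 * u4),
        b3 * (u2 - u3),
        b4 * (i t - u4 - d4 * u4 * u2)))"

definition solves_on :: "(real \<Rightarrow> 'a::real_normed_vector \<Rightarrow> 'a) \<Rightarrow> (real \<Rightarrow> 'a) \<Rightarrow> real set \<Rightarrow> bool" where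
  "solves_on f x S \<longleftrightarrow> (\<forall>t\<in>S. (x has_vector_derivative f t (x t)) (at t within S))"

definition unif_stable :: "(real \<Rightarrow> 'a::real_normed_vector \<Rightarrow> 'a) \<Rightarrow> (real \<Rightarrow> 'a) \<Rightarrow> bool" where
  "unif_stable f p \<longleftrightarrow>
    (\<forall>\<epsilon>>0. \<exists>\<delta>>0. \<forall>t0\<ge>0.
       (\<forall>x0. norm (x0 - p t0) < \<delta> \<longrightarrow> (\<exists>x. x t0 = x0 \<and> solves_on f x {t0..})) \<and>
       (\<forall>x T. solves_on f x {t0..T} \<and> norm (x t0 - p t0) < \<delta> \<longrightarrow>
              (\<forall>t\<in>{t0..T}. norm (x t - p t) < \<epsilon>)))"

definition unif_asym_stable :: "(real \<Rightarrow> 'a::real_normed_vector \<Rightarrow> 'a) \<Rightarrow> (real \<Rightarrow> 'a) \<Rightarrow> bool" where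
  "unif_asym_stable f p \<longleftrightarrow> unif_stable f p \<and>
    (\<exists>\<delta>0>0. \<forall>\<epsilon>>0. \<exists>T>0. \<forall>t0\<ge>0. \<forall>x.
       solves_on f x {t0..} \<and> norm (x t0 - p t0) < \<delta>0 \<longrightarrow>
       (\<forall>t\<ge>t0 + T. norm (x t - p t) < \<epsilon>))"

text \<open>Lyapunov instability (negation of (non-uniform) Lyapunov stability): for some initial
  time t0 and some eps, arbitrarily close initial data give solutions leaving the eps-ball.\<close>
definition lyap_unstable :: "(real \<Rightarrow> 'a::real_normed_vector \<Rightarrow> 'a) \<Rightarrow> (real \<Rightarrow> 'a) \<Rightarrow> bool" where
  "lyap_unstable f p \<longleftrightarrow>
    (\<exists>t0\<ge>0. \<exists>\<epsilon>>0. \<forall>\<delta>>0. \<exists>x T. solves_on f x {t0..T} \<and> norm (x t0 - p t0) < \<delta> \<and>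
        (\<exists>t\<in>{t0..T}. norm (x t - p t) \<ge> \<epsilon>))"

end

theory Submission
  imports Defs "HOL-Analysis.Analysis"
begin


lemma barrier:
  fixes \<phi> \<phi>' :: "nat \<Rightarrow> real \<Rightarrow> real" and J :: "nat set"
  assumes fin: "finite J" and ab: "a \<le> b"
    and D: "\<And>j t. j\<in>J \<Longrightarrow> t\<in>{a..b} \<Longrightarrow> (\<phi> j has_real_derivative \<phi>' j t) (at t within {a..b})"
    and init: "\<And>j. j\<in>J \<Longrightarrow> \<phi> j a < 0"
    and cross: "\<And>j t. j\<in>J \<Longrightarrow> t\<in>{a..b} \<Longrightarrow> (\<forall>k\<in>J. \<phi> k t \<le> 0) \<Longrightarrow> \<phi> j t = 0 \<Longrightarrow> \<phi>' j t < 0"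
  shows "\<forall>j\<in>J. \<forall>t\<in>{a..b}. \<phi> j t < 0"
proof (rule ccontr)
  assume nt: "\<not> ?thesis"
  define S where "S = (\<Union>j\<in>J. {t\<in>{a..b}. 0 \<le> \<phi> j t})"
  have cont: "continuous_on {a..b} (\<phi> j)" if "j \<in> J" for j
    using D[OF that] by (meson DERIV_continuous continuous_on_eq_continuous_within)
  have clS: "closed S" unfolding S_def
    by (intro closed_UN fin ballI continuous_on_closed_Collect_le cont) (auto)
  have neS: "S \<noteq> {}" using nt unfolding S_def by force
  have bdd: "bdd_below S" unfolding S_def by (rule bdd_belowI[of _ a]) auto
  define s where "s = Inf S"
  have sS: "s \<in> S" unfolding s_def using closed_contains_Inf[OF neS bdd clS] .
  have sab: "s \<in> {a..b}" using sS unfolding S_def by auto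
  have below: "\<phi> k t < 0" if "k \<in> J" "t \<in> {a..b}" "t < s" for k t
  proof (rule ccontr)
    assume "\<not> \<phi> k t < 0"
    then have "t \<in> S" using that unfolding S_def by (auto intro!: bexI[of _ k])
    then have "s \<le> t" unfolding s_def by (simp add: bdd cInf_lower)
    then show False using that by simp
  qed
  obtain j where jJ: "j \<in> J" and j0: "0 \<le> \<phi> j s" using sS unfolding S_def by auto
  have sa: "a < s"
  proof (rule ccontr)
    assume "\<not> a < s" then have "s = a" using sab by auto
    then show False using init[OF jJ] j0 by simp
  qed
  have le0: "\<phi> k s \<le> 0" if kJ: "k \<in> J" for k
  proof (rule ccontr)
    assume "\<not> \<phi> k s \<le> 0"
    then have pos: "\<phi> k s > 0" by simp
    have "continuous (at s within {a..b}) (\<phi> k)"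
      using cont[OF kJ] sab continuous_on_eq_continuous_within by blast
    then obtain d where d: "d > 0" "\<And>t. t\<in>{a..b} \<Longrightarrow> dist t s < d \<Longrightarrow> dist (\<phi> k t) (\<phi> k s) < \<phi> k s"
      using pos unfolding continuous_within_eps_delta by blast
    define m where "m = min d (s - a)"
    have m: "0 < m" "m \<le> d" "m \<le> s - a" using d(1) sa by (auto simp: m_def)
    define t where "t = s - m / 2"
    have "t \<in> {a..b}" "dist t s < d" "t < s" using m sab unfolding t_def dist_real_def by auto
    then have "dist (\<phi> k t) (\<phi> k s) < \<phi> k s" "\<phi> k t < 0" using d below[OF kJ] by auto
    then show False unfolding dist_real_def by auto
  qed
  have "\<phi> j s = 0" using le0[OF jJ] j0 by simp
  then have neg: "\<phi>' j s < 0" using cross[OF jJ sab] le0 by blast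
  obtain d where d: "d > 0" "\<And>h. h > 0 \<Longrightarrow> s - h \<in> {a..b} \<Longrightarrow> h < d \<Longrightarrow> \<phi> j s < \<phi> j (s - h)"
    using has_real_derivative_neg_dec_left[OF D[OF jJ sab] neg] by blast
  define m where "m = min d (s - a)"
  have m: "0 < m" "m \<le> d" "m \<le> s - a" using d(1) sa by (auto simp: m_def)
  define h where "h = m / 2"
  have "h > 0" "s - h \<in> {a..b}" "h < d" using m sab unfolding h_def by auto
  then have "\<phi> j s < \<phi> j (s - h)" "\<phi> j (s - h) < 0" using d below[OF jJ] by auto
  then show False using j0 by simp
qed


lemma picard_local:
  fixes G :: "real \<Rightarrow> 'a::banach \<Rightarrow> 'a"
  assumes ab: "a \<le> b" and L: "0 \<le> L" "(b - a) * L < 1"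
    and Gc: "\<And>f. continuous_on {a..b} f \<Longrightarrow> continuous_on {a..b} (\<lambda>s. G s (f s))"
    and Lip: "\<And>t u v. t \<in> {a..b} \<Longrightarrow> norm (G t u - G t v) \<le> L * norm (u - v)"
  shows "\<exists>x. continuous_on {a..b} x \<and> (\<forall>t\<in>{a..b}. x t = x0 + integral {a..t} (\<lambda>s. G s (x s)))"
proof -
  define cl where "cl t = max a (min b t)" for t
  have cl_in: "cl t \<in> {a..b}" for t using ab by (auto simp: cl_def)
  have cl_id: "t \<in> {a..b} \<Longrightarrow> cl t = t" for t by (auto simp: cl_def)
  have cl_cont: "continuous_on UNIV cl" unfolding cl_def by (intro continuous_intros)
  define H where "H f = (\<lambda>t. x0 + integral {a..cl t} (\<lambda>s. G s (apply_bcontfun f s)))" for f :: "real \<Rightarrow>\<^sub>C 'a"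
  have gc: "continuous_on {a..b} (\<lambda>s. G s (apply_bcontfun f s))" for f :: "real \<Rightarrow>\<^sub>C 'a"
    by (rule Gc) simp
  have Hb: "H f \<in> bcontfun" for f
  proof -
    let ?g = "\<lambda>s. G s (apply_bcontfun f s)"
    have ic: "continuous_on {a..b} (\<lambda>u. integral {a..u} ?g)"
      by (intro indefinite_integral_continuous_1 integrable_continuous_real gc)
    have c: "continuous_on UNIV (H f)" unfolding H_def
      by (intro continuous_intros continuous_on_compose2[OF ic cl_cont]) (use cl_in in auto)
    have "range (H f) \<subseteq> (\<lambda>u. x0 + integral {a..u} ?g) ` {a..b}"
      unfolding H_def using cl_in by auto
    moreover have "compact ((\<lambda>u. x0 + integral {a..u} ?g) ` {a..b})"
      by (intro compact_continuous_image continuous_intros ic) simp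
    ultimately have "bounded (range (H f))" using compact_imp_bounded bounded_subset by blast
    then show ?thesis using c unfolding bcontfun_def by simp
  qed
  define P where "P f = Bcontfun (H f)" for f
  have Papp: "apply_bcontfun (P f) = H f" for f unfolding P_def using Hb Bcontfun_inverse by blast
  have contr: "dist (P f) (P g) \<le> ((b - a) * L) * dist f g" for f g
  proof (rule dist_bound)
    fix t
    let ?d = "\<lambda>s. G s (apply_bcontfun f s) - G s (apply_bcontfun g s)"
    have "dist (P f t) (P g t) = norm (integral {a..cl t} (\<lambda>s. G s (apply_bcontfun f s)) - integral {a..cl t} (\<lambda>s. G s (apply_bcontfun g s)))"
      unfolding Papp H_def dist_norm by simp
    also have "\<dots> = norm (integral {a..cl t} ?d)"
    proof -
      have sub: "{a..cl t} \<subseteq> {a..b}" using cl_in by auto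
      have "(\<lambda>s. G s (apply_bcontfun f s)) integrable_on {a..cl t}" "(\<lambda>s. G s (apply_bcontfun g s)) integrable_on {a..cl t}"
        using integrable_continuous_real[OF continuous_on_subset[OF gc sub]] by auto
      then show ?thesis by (simp add: integral_diff)
    qed
    also have "\<dots> \<le> (L * dist f g) * (cl t - a)"
    proof (rule integral_bound)
      show "a \<le> cl t" using cl_in by auto
      have sub: "{a..cl t} \<subseteq> {a..b}" using cl_in by auto
      show "continuous_on {a..cl t} ?d" using continuous_on_subset[OF gc sub] by (intro continuous_intros) auto
      fix s assume s: "s \<in> {a..cl t}"
      then have "s \<in> {a..b}" using sub by auto
      then have "norm (?d s) \<le> L * norm (apply_bcontfun f s - apply_bcontfun g s)" by (rule Lip)
      also have "\<dots> \<le> L * dist f g" using dist_bounded[of f s g] L by (intro mult_left_mono) (auto simp: dist_norm)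
      finally show "norm (?d s) \<le> L * dist f g" .
    qed
    also have "\<dots> \<le> (L * dist f g) * (b - a)" using cl_in L by (intro mult_left_mono) auto
    finally show "dist (P f t) (P g t) \<le> (b - a) * L * dist f g" by (simp add: algebra_simps)
  qed
  have "0 \<le> (b - a) * L" using ab L by simp
  then obtain f where f: "P f = f" using banach_fix_type[of "(b - a) * L" P] contr L by blast
  show ?thesis
  proof (intro exI conjI ballI)
    show "continuous_on {a..b} (apply_bcontfun f)" by simp
    fix t assume t: "t \<in> {a..b}"
    have "apply_bcontfun f t = apply_bcontfun (P f) t" using f by simp
    also have "\<dots> = x0 + integral {a..t} (\<lambda>s. G s (apply_bcontfun f s))" unfolding Papp H_def using cl_id[OF t] by simp
    finally show "apply_bcontfun f t = x0 + integral {a..t} (\<lambda>s. G s (apply_bcontfun f s))" .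
  qed
qed


lemma picard_global:
  fixes G :: "real \<Rightarrow> 'a::banach \<Rightarrow> 'a"
  assumes L: "0 \<le> L"
    and Gc: "\<And>f a b. t0 \<le> a \<Longrightarrow> continuous_on {a..b} f \<Longrightarrow> continuous_on {a..b} (\<lambda>s. G s (f s))"
    and Lip: "\<And>t u v. t0 \<le> t \<Longrightarrow> norm (G t u - G t v) \<le> L * norm (u - v)"
  shows "\<exists>x. x t0 = x0 \<and> (\<forall>t\<ge>t0. (x has_vector_derivative G t (x t)) (at t within {t0..}))"
proof -
  define h where "h = 1 / (2 * (L + 1))"
  have h: "h > 0" "h * L < 1" using L by (auto simp: h_def field_simps)
  define Pr where "Pr a y x \<longleftrightarrow> continuous_on {a..a+h} x \<and> (\<forall>t\<in>{a..a+h}. x t = y + integral {a..t} (\<lambda>s. G s (x s)))" for a y x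
  define loc where "loc a y = (SOME x. Pr a y x)" for a y
  have loc: "Pr a y (loc a y)" if "t0 \<le> a" for a y
  proof -
    have "\<exists>x. Pr a y x" unfolding Pr_def
    proof (rule picard_local)
      show "a \<le> a + h" "0 \<le> L" "(a + h - a) * L < 1" using h L by auto
      show "continuous_on {a..a + h} (\<lambda>s. G s (f s))" if "continuous_on {a..a + h} f" for f
        using Gc[OF \<open>t0 \<le> a\<close> that] .
      show "norm (G t u - G t v) \<le> L * norm (u - v)" if "t \<in> {a..a + h}" for t u v
        using Lip[of t] that \<open>t0 \<le> a\<close> by auto
    qed
    then show ?thesis unfolding loc_def by (rule someI_ex)
  qed
  define s where "s n = t0 + real n * h" for n :: nat
  have sSuc: "s (Suc n) = s n + h" for n by (simp add: s_def algebra_simps)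
  have s_ge: "t0 \<le> s n" for n using h by (simp add: s_def)
  define pc where "pc = rec_nat (loc t0 x0) (\<lambda>n f. loc (s (Suc n)) (f (s (Suc n))))"
  have pc0: "pc 0 = loc t0 x0" and pcS: "pc (Suc n) = loc (s (Suc n)) (pc n (s (Suc n)))" for n
    by (simp_all add: pc_def)
  have Pr0: "Pr (s 0) x0 (pc 0)" using loc[of t0 x0] by (simp add: pc0 s_def)
  have PrS: "Pr (s (Suc n)) (pc n (s (Suc n))) (pc (Suc n))" for n
    unfolding pcS by (rule loc[OF s_ge])
  define X where "X t = pc (nat \<lfloor>(t - t0) / h\<rfloor>) t" for t
  have pc_start: "pc (Suc n) (s (Suc n)) = pc n (s (Suc n))" for n
    using PrS[of n] unfolding Pr_def by (auto simp: sSuc h(1) less_imp_le)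
  have XP: "X t = pc n t" if t: "t \<in> {s n..s (Suc n)}" for n t
  proof (cases "t = s (Suc n)")
    case True
    have "(t - t0) / h = real (Suc n)" using True h by (simp add: s_def)
    then have "nat \<lfloor>(t - t0) / h\<rfloor> = Suc n" by simp
    then have "X t = pc (Suc n) t" unfolding X_def by simp
    then show ?thesis using pc_start True by simp
  next
    case False
    then have "s n \<le> t" "t < s n + h" using t sSuc by auto
    then have "real n \<le> (t - t0) / h" "(t - t0) / h < real n + 1"
      using h by (auto simp: s_def field_simps)
    then have "\<lfloor>(t - t0) / h\<rfloor> = int n" by (simp add: floor_eq_iff)
    then show ?thesis unfolding X_def by simp
  qed
  define g where "g u = G u (X u)" for u
  have Q: "continuous_on {t0..s (Suc n)} X \<and> (\<forall>t\<in>{t0..s (Suc n)}. X t = x0 + integral {t0..t} g)" for n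
  proof (induction n)
    case 0
    have eq: "\<And>t. t \<in> {t0..s (Suc 0)} \<Longrightarrow> X t = pc 0 t" using XP[of _ 0] by (simp add: s_def)
    have c0: "continuous_on {t0..s (Suc 0)} (pc 0)" "\<forall>t\<in>{t0..s (Suc 0)}. pc 0 t = x0 + integral {t0..t} (\<lambda>u. G u (pc 0 u))"
      using Pr0 unfolding Pr_def by (auto simp: s_def)
    show ?case
    proof
      show "continuous_on {t0..s (Suc 0)} X" using continuous_on_eq[OF c0(1)] eq by auto
      show "\<forall>t\<in>{t0..s (Suc 0)}. X t = x0 + integral {t0..t} g"
      proof
        fix t assume t: "t \<in> {t0..s (Suc 0)}"
        have "integral {t0..t} g = integral {t0..t} (\<lambda>u. G u (pc 0 u))"
          unfolding g_def using t eq by (intro Henstock_Kurzweil_Integration.integral_cong) auto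
        then show "X t = x0 + integral {t0..t} g" using c0(2) t eq by auto
      qed
    qed
  next
    case (Suc n)
    let ?a = "s (Suc n)" and ?b = "s (Suc (Suc n))"
    have ab: "t0 \<le> ?a" "?a \<le> ?b" using s_ge h sSuc[of "Suc n"] by auto
    have eq: "\<And>t. t \<in> {?a..?b} \<Longrightarrow> X t = pc (Suc n) t" using XP[of _ "Suc n"] by simp
    have c1: "continuous_on {?a..?b} (pc (Suc n))" "\<forall>t\<in>{?a..?b}. pc (Suc n) t = pc n ?a + integral {?a..t} (\<lambda>u. G u (pc (Suc n) u))"
      using PrS[of n] unfolding Pr_def by (auto simp: sSuc)
    have cX1: "continuous_on {?a..?b} X" using continuous_on_eq[OF c1(1)] eq by auto
    have un: "{t0..?b} = {t0..?a} \<union> {?a..?b}" using ab by auto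
    have cX: "continuous_on {t0..?b} X" unfolding un
      by (rule continuous_on_closed_Un) (use Suc.IH cX1 in auto)
    have cg: "continuous_on {t0..?b} g" unfolding g_def by (rule Gc[OF order_refl cX])
    show ?case
    proof (intro conjI ballI cX)
      fix t assume t: "t \<in> {t0..?b}"
      show "X t = x0 + integral {t0..t} g"
      proof (cases "t \<le> ?a")
        case True then show ?thesis using Suc.IH t by auto
      next
        case False
        then have ta: "t \<in> {?a..?b}" using t by auto
        have Xa: "X ?a = pc n ?a" using XP[of ?a n] ab sSuc h by auto
        have "integral {?a..t} g = integral {?a..t} (\<lambda>u. G u (pc (Suc n) u))"
          unfolding g_def using ta eq by (intro Henstock_Kurzweil_Integration.integral_cong) auto
        then have "X t = X ?a + integral {?a..t} g" using c1(2) ta eq Xa by auto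
        also have "X ?a = x0 + integral {t0..?a} g" using Suc.IH ab by auto
        also have "x0 + integral {t0..?a} g + integral {?a..t} g = x0 + integral {t0..t} g"
        proof -
          have "g integrable_on {t0..t}"
            by (rule integrable_continuous_real, rule continuous_on_subset[OF cg]) (use t in auto)
          then show ?thesis using Henstock_Kurzweil_Integration.integral_combine[where a=t0 and c="?a" and b=t and f=g] ab ta by (auto simp: add.assoc)
        qed
        finally show ?thesis .
      qed
    qed
  qed
  show ?thesis
  proof (intro exI conjI allI impI)
    show "X t0 = x0" using Q[of 0] h by (auto simp: s_def)
    fix t assume t: "t0 \<le> t"
    define n where "n = nat \<lceil>(t - t0) / h\<rceil>"
    have "(t - t0) / h \<le> real n" unfolding n_def by linarith
    then have "t - t0 \<le> real n * h" using h by (simp add: field_simps)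
    then have tB: "t < s (Suc n)" using h by (simp add: s_def algebra_simps)
    let ?B = "s (Suc n)"
    have cg: "continuous_on {t0..?B} g" unfolding g_def by (rule Gc[OF order_refl]) (use Q in blast)
    have d: "((\<lambda>u. x0 + integral {t0..u} g) has_vector_derivative g t) (at t within {t0..?B})"
      using integral_has_vector_derivative[OF cg, of t] t tB
      by (auto intro!: derivative_eq_intros)
    have d2: "(X has_vector_derivative g t) (at t within {t0..?B})"
      by (rule has_vector_derivative_transform[OF _ _ d]) (use t tB Q in auto)
    have "at t within {t0..} = at t within {t0..?B}"
      by (rule at_within_nhd[of _ "{..<?B}"]) (use tB in auto)
    then show "(X has_vector_derivative G t (X t)) (at t within {t0..})" using d2 by (simp add: g_def)
  qed
qed


lemma periodic_shift:
  assumes per: "\<forall>t\<ge>0. f (t + \<rho>) = (f t :: real)" and rr: "(\<rho>::real) = \<rho>" and t: "t \<ge> 0" and r: "\<rho> \<ge> 0"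
  shows "f (t + real n * \<rho>) = f t"
proof (induction n)
  case 0 then show ?case by simp
next
  case (Suc n)
  have e: "t + real (Suc n) * \<rho> = (t + real n * \<rho>) + \<rho>" by (simp add: algebra_simps)
  have "t + real n * \<rho> \<ge> 0" using t r by simp
  then have "f ((t + real n * \<rho>) + \<rho>) = f (t + real n * \<rho>)" using per by blast
  from this Suc show ?case by (simp only: e)
qed

lemma periodic_bound:
  assumes rho: "(\<rho>::real) > 0" and per: "\<forall>t\<ge>0. f (t + \<rho>) = (f t :: real)" and c: "continuous_on {0..\<rho>} f"
  shows "\<exists>M\<ge>0. \<forall>t\<ge>0. \<bar>f t\<bar> \<le> M"
proof -
  have "compact (f ` {0..\<rho>})" by (rule compact_continuous_image[OF c compact_Icc])
  then obtain M where M: "\<And>x. x \<in> f ` {0..\<rho>} \<Longrightarrow> norm x \<le> M" using compact_imp_bounded bounded_iff by metis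
  have "\<bar>f t\<bar> \<le> M" if t: "t \<ge> 0" for t
  proof -
    define n where "n = nat \<lfloor>t / \<rho>\<rfloor>"
    define t' where "t' = t - real n * \<rho>"
    have q: "0 \<le> t / \<rho>" using t rho by simp
    have e: "real n = of_int \<lfloor>t / \<rho>\<rfloor>" unfolding n_def using q by simp
    have "real n \<le> t / \<rho>" "t / \<rho> < real n + 1" unfolding e by linarith+
    then have "0 \<le> t'" "t' \<le> \<rho>" using rho unfolding t'_def by (auto simp: field_simps)
    then have "f t = f t'" using periodic_shift[OF per, of t' n] rho unfolding t'_def by simp
    then show ?thesis using M[of "f t'"] \<open>0 \<le> t'\<close> \<open>t' \<le> \<rho>\<close> by auto
  qed
  moreover have "M \<ge> 0" using M[of "f 0"] rho by force
  ultimately show ?thesis by blast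
qed

locale sys =
  fixes a1 a2 b2 b3 b4 d1 d2 d4 \<rho> iM :: real and i w :: "real \<Rightarrow> real"
  assumes pos: "a1 > 0" "a2 > 0" "b2 > 0" "b3 > 0" "b4 > 0" "d1 > 0" "d2 > 0" "d4 > 0"
    and rho: "\<rho> > 0"
    and i_cont: "continuous_on {0..} i"
    and i_range: "\<forall>t\<ge>0. 0 \<le> i t \<and> i t \<le> iM"
    and i_per: "\<forall>t\<ge>0. i (t + \<rho>) = i t"
    and i_mean: "(1 / \<rho>) * integral {0..\<rho>} i = 1"
    and w_ode: "\<forall>t\<ge>0. (w has_real_derivative b4 * (i t - w t)) (at t within {0..})"
    and w_per: "\<forall>t\<ge>0. w (t + \<rho>) = w t"
begin

lemma w_cont: "continuous_on {0..} w"
  using w_ode by (meson DERIV_continuous atLeast_iff continuous_on_eq_continuous_within)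

lemma w_deriv: assumes "0 \<le> a" "t \<in> {a..b}" shows "(w has_real_derivative b4 * (i t - w t)) (at t within {a..b})"
proof -
  have "t \<ge> 0" using assms by auto
  then have "(w has_real_derivative b4 * (i t - w t)) (at t within {0..})" using w_ode by blast
  then show ?thesis by (rule DERIV_subset) (use assms in auto)
qed

lemma w_bound: "\<exists>M\<ge>0. \<forall>t\<ge>0. \<bar>w t\<bar> \<le> M"
  by (rule periodic_bound[OF rho w_per continuous_on_subset[OF w_cont]]) auto

lemma int_w: "integral {0..\<rho>} w = \<rho>"
proof -
  have "((\<lambda>t. b4 * (i t - w t)) has_integral (w \<rho> - w 0)) {0..\<rho>}"
    using rho by (intro fundamental_theorem_of_calculus)
      (auto simp: has_real_derivative_iff_has_vector_derivative[symmetric] intro!: w_deriv)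
  moreover have "w \<rho> = w 0" using w_per[rule_format, of 0] by simp
  ultimately have "((\<lambda>t. b4 * (i t - w t)) has_integral 0) {0..\<rho>}" by simp
  then have "((\<lambda>t. (1/b4) * (b4 * (i t - w t))) has_integral (1/b4) * 0) {0..\<rho>}" by (rule has_integral_mult_right)
  then have "((\<lambda>t. i t - w t) has_integral 0) {0..\<rho>}" using pos by simp
  then have z: "integral {0..\<rho>} (\<lambda>t. i t - w t) = 0" by (rule integral_unique)
  have ii: "i integrable_on {0..\<rho>}" "w integrable_on {0..\<rho>}"
    using continuous_on_subset[OF i_cont] continuous_on_subset[OF w_cont]
    by (auto intro!: integrable_continuous_real)
  have "integral {0..\<rho>} i - integral {0..\<rho>} w = 0" using z integral_diff[OF ii] by simp
  then have "integral {0..\<rho>} w = integral {0..\<rho>} i" by simp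
  also have "\<dots> = \<rho>" using i_mean rho by (simp add: field_simps)
  finally show ?thesis .
qed

definition Th :: "real \<Rightarrow> real" where "Th t = integral {0..t} (\<lambda>s. 1 - w s)"

lemma Th_deriv0: "0 \<le> t \<Longrightarrow> t \<le> b \<Longrightarrow> (Th has_real_derivative 1 - w t) (at t within {0..b})"
  unfolding Th_def
  by (rule integral_has_real_derivative) (auto intro!: continuous_intros continuous_on_subset[OF w_cont])

lemma Th_deriv: "0 \<le> a \<Longrightarrow> t \<in> {a..b} \<Longrightarrow> (Th has_real_derivative 1 - w t) (at t within {a..b})"
  by (rule DERIV_subset[OF Th_deriv0]) auto

lemma Th_rho: "Th \<rho> = 0"
proof -
  have "integral {0..\<rho>} (\<lambda>s. 1 - w s) = integral {0..\<rho>} (\<lambda>s. 1) - integral {0..\<rho>} w"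
    using continuous_on_subset[OF w_cont]
    by (intro integral_diff) (auto intro!: integrable_continuous_real)
  then show ?thesis unfolding Th_def using int_w rho by simp
qed

lemma Th_per: "t \<ge> 0 \<Longrightarrow> Th (t + \<rho>) = Th t"
proof -
  assume t: "t \<ge> 0"
  define k where "k s = Th (s + \<rho>) - Th s" for s
  have "(k has_real_derivative 0) (at s within {0..t})" if s: "s \<in> {0..t}" for s
  proof -
    have d1: "(Th has_real_derivative 1 - w (s + \<rho>)) (at ((\<lambda>x. x + \<rho>) s) within ((\<lambda>x. x + \<rho>) ` {0..t}))"
      by (rule DERIV_subset[OF Th_deriv0[of "s + \<rho>" "t + \<rho>"]]) (use s rho in auto)
    have d2: "((\<lambda>x. x + \<rho>) has_real_derivative 1) (at s within {0..t})"
      by (auto intro!: derivative_eq_intros)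
    have "((\<lambda>x. Th (x + \<rho>)) has_real_derivative (1 - w (s + \<rho>)) * 1) (at s within {0..t})"
      using DERIV_image_chain[OF d1 d2] by (simp add: o_def)
    moreover have "(Th has_real_derivative 1 - w s) (at s within {0..t})" using Th_deriv0[of s t] s by auto
    ultimately have "(k has_real_derivative (1 - w (s + \<rho>)) * 1 - (1 - w s)) (at s within {0..t})"
      unfolding k_def by (rule DERIV_diff)
    then show ?thesis using w_per s by auto
  qed
  then obtain c where "\<forall>x\<in>{0..t}. k x = c" using has_field_derivative_zero_constant[of "{0..t}" k] by auto
  then have "k t = k 0" using t by auto
  then show ?thesis using Th_rho unfolding k_def by (simp add: Th_def)
qed

lemma Th_bound: "\<exists>M\<ge>0. \<forall>t\<ge>0. \<bar>Th t\<bar> \<le> M"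
proof (rule periodic_bound[OF rho])
  show "\<forall>t\<ge>0. Th (t + \<rho>) = Th t" using Th_per by auto
  show "continuous_on {0..\<rho>} Th"
    using Th_deriv0[of _ \<rho>] by (meson DERIV_continuous atLeastAtMost_iff continuous_on_eq_continuous_within)
qed

end




lemma neg_le_abs_mult: "0 \<le> (b::real) \<Longrightarrow> - (b * s) \<le> b * \<bar>s\<bar>"
proof -
  assume b: "0 \<le> b"
  have "- s \<le> \<bar>s\<bar>" by simp
  then have "b * (- s) \<le> b * \<bar>s\<bar>" using b by (rule mult_left_mono)
  then show ?thesis by simp
qed

lemma cross_v:
  fixes v x1 x4 B W b2 a2 d2 c Y Ae Af :: real
  assumes "v^2 = B^2" "B > 0" "b2 > 0" "\<bar>v\<bar> \<le> Y" "\<bar>x1 - 1\<bar> \<le> Ae" "\<bar>x4 - W\<bar> \<le> Af" "a2 > 0" "d2 > 0"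
    "b2 * (Y + a2 * Ae + d2 * Af) < c / 2" "c = b2 * (a2 + d2 - 1)"
  shows "2 * v * (b2 * v * (1 - v - a2 * x1 - d2 * x4)) - 2 * B * (B * (- (c / 2) + b2 * d2 * (1 - W))) < 0"
proof -
  have e: "2 * v * (b2 * v * (1 - v - a2 * x1 - d2 * x4)) - 2 * B * (B * (- (c / 2) + b2 * d2 * (1 - W)))
     = 2 * B^2 * (- (c/2) - b2 * (v + a2 * (x1 - 1) + d2 * (x4 - W)))"
  proof -
    have "2 * v * (b2 * v * (1 - v - a2 * x1 - d2 * x4)) - 2 * B * (B * (- (c / 2) + b2 * d2 * (1 - W)))
       = 2 * v^2 * (b2 * (1 - v - a2 * x1 - d2 * x4)) - 2 * B^2 * (- (c / 2) + b2 * d2 * (1 - W))"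
      by (simp add: power2_eq_square algebra_simps)
    also have "\<dots> = 2 * B^2 * (b2 * (1 - v - a2 * x1 - d2 * x4) - (- (c / 2) + b2 * d2 * (1 - W)))"
      using assms(1) by (simp add: algebra_simps)
    also have "\<dots> = 2 * B^2 * (- (c/2) - b2 * (v + a2 * (x1 - 1) + d2 * (x4 - W)))"
      unfolding assms(10) by (simp add: algebra_simps)
    finally show ?thesis .
  qed
  have "\<bar>v + a2 * (x1 - 1) + d2 * (x4 - W)\<bar> \<le> Y + a2 * Ae + d2 * Af"
  proof -
    have "\<bar>a2 * (x1 - 1)\<bar> \<le> a2 * Ae" using assms(5,7) by (simp add: abs_mult)
    moreover have "\<bar>d2 * (x4 - W)\<bar> \<le> d2 * Af" using assms(6,8) by (simp add: abs_mult)
    ultimately show ?thesis using assms(4) by linarith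
  qed
  then have "b2 * \<bar>v + a2 * (x1 - 1) + d2 * (x4 - W)\<bar> \<le> b2 * (Y + a2 * Ae + d2 * Af)"
    using assms(3) by (intro mult_left_mono) auto
  moreover have "- (b2 * (v + a2 * (x1 - 1) + d2 * (x4 - W))) \<le> b2 * \<bar>v + a2 * (x1 - 1) + d2 * (x4 - W)\<bar>"
    using assms(3) by (intro neg_le_abs_mult) simp
  ultimately have "- (c/2) - b2 * (v + a2 * (x1 - 1) + d2 * (x4 - W)) < 0"
    using assms(9) by linarith
  moreover have "2 * B^2 > 0" using assms(2) by simp
  ultimately show ?thesis unfolding e by (simp add: mult_pos_neg)
qed




lemma sq_eq_abs: "(e::real)^2 = Q^2 \<Longrightarrow> Q > 0 \<Longrightarrow> \<bar>e\<bar> = Q"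
  using power2_eq_iff[of e Q] by auto

lemma abs_lin2: "0 \<le> (a::real) \<Longrightarrow> 0 \<le> d \<Longrightarrow> \<bar>v\<bar> \<le> V \<Longrightarrow> \<bar>z\<bar> \<le> Z \<Longrightarrow> \<bar>a * v + d * z\<bar> \<le> a * V + d * Z"
proof -
  assume h: "0 \<le> a" "0 \<le> d" "\<bar>v\<bar> \<le> V" "\<bar>z\<bar> \<le> Z"
  have "\<bar>a * v + d * z\<bar> \<le> \<bar>a * v\<bar> + \<bar>d * z\<bar>" by (rule abs_triangle_ineq)
  also have "\<bar>a * v\<bar> \<le> a * V" using h by (simp add: abs_mult mult_left_mono)
  also have "\<bar>d * z\<bar> \<le> d * Z" using h by (simp add: abs_mult mult_left_mono)
  finally show ?thesis by simp
qed

lemma cross_1: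
  fixes x1 v z Q V Z a1 d1 \<mu> :: real
  assumes "(x1 - 1)^2 = Q^2" "Q > 0" "Q \<le> 1/2" "\<bar>v\<bar> \<le> V" "\<bar>z\<bar> \<le> Z" "a1 > 0" "d1 > 0"
    "0 \<le> \<mu>" "\<mu> \<le> 1/4" "3 * (a1 * V + d1 * Z) < Q / 2"
  shows "2 * (x1 - 1) * (x1 * (1 - x1 - a1 * v - d1 * z)) - 2 * Q * (- \<mu> * Q) < 0"
proof -
  define e where "e = x1 - 1"
  have e2: "e^2 = Q^2" using assms(1) unfolding e_def .
  have ae: "\<bar>e\<bar> = Q" using sq_eq_abs[OF e2 assms(2)] .
  have x1: "x1 = 1 + e" unfolding e_def by simp
  define P where "P = (1 + e) * e * (a1 * v + d1 * z)"
  have L: "2 * (x1 - 1) * (x1 * (1 - x1 - a1 * v - d1 * z)) - 2 * Q * (- \<mu> * Q)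
      = - 2 * ((1 + e) * e^2) - 2 * P + 2 * (\<mu> * Q^2)"
    unfolding x1 P_def by (simp add: power2_eq_square algebra_simps)
  have h1: "1 + e \<ge> 1/2" "\<bar>1 + e\<bar> \<le> 3/2" using ae assms(3) by auto
  have "(1/2) * Q^2 \<le> (1 + e) * Q^2" using h1 by (intro mult_right_mono) auto
  then have A: "- 2 * ((1 + e) * e^2) \<le> - (Q^2)" using e2 by simp
  have "\<bar>a1 * v + d1 * z\<bar> \<le> a1 * V + d1 * Z" using assms by (intro abs_lin2) auto
  moreover have "\<bar>(1 + e) * e\<bar> \<le> (3/2) * Q"
  proof -
    have "\<bar>1 + e\<bar> * \<bar>e\<bar> \<le> (3/2) * Q" using h1(2) ae by (intro mult_mono) auto
    then show ?thesis by (simp add: abs_mult)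
  qed
  ultimately have B: "\<bar>P\<bar> \<le> (3/2) * Q * (a1 * V + d1 * Z)"
    unfolding P_def abs_mult[of "(1 + e) * e"] by (intro mult_mono) auto
  have C: "\<mu> * Q^2 \<le> (1/4) * Q^2" using assms(9) by (intro mult_right_mono) auto
  have "2 * (x1 - 1) * (x1 * (1 - x1 - a1 * v - d1 * z)) - 2 * Q * (- \<mu> * Q) \<le> - (Q^2)/2 + 3 * Q * (a1 * V + d1 * Z)"
    unfolding L using A B C using abs_le_iff[of P] by linarith
  also have "\<dots> = Q * (3 * (a1 * V + d1 * Z) - Q/2)" by (simp add: power2_eq_square algebra_simps)
  also have "\<dots> < 0" using assms(2,10) by (simp add: mult_pos_neg)
  finally show ?thesis .
qed




lemma cross_2:
  fixes z v Q V b3 \<mu> :: real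
  assumes "z^2 = Q^2" "Q > 0" "\<bar>v\<bar> \<le> V" "b3 > 0" "0 \<le> \<mu>" "\<mu> \<le> b3/2" "2 * V < Q"
  shows "2 * z * (b3 * (v - z)) - 2 * Q * (- \<mu> * Q) < 0"
proof -
  have az: "\<bar>z\<bar> = Q" using sq_eq_abs[OF assms(1,2)] .
  have "2 * z * (b3 * (v - z)) - 2 * Q * (- \<mu> * Q) = 2 * (b3 * (z * v)) - 2 * (b3 * z^2) + 2 * (\<mu> * Q^2)"
    by (simp add: power2_eq_square algebra_simps)
  also have "\<dots> \<le> 2 * (b3 * (Q * V)) - 2 * (b3 * Q^2) + 2 * ((b3/2) * Q^2)"
  proof -
    have "\<bar>z\<bar> * \<bar>v\<bar> \<le> Q * V" using az assms(3) by (intro mult_mono) auto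
    then have "z * v \<le> Q * V" by (metis abs_ge_self abs_mult order_trans)
    then have "b3 * (z * v) \<le> b3 * (Q * V)" using assms(4) by (intro mult_left_mono) auto
    moreover have "\<mu> * Q^2 \<le> (b3/2) * Q^2" using assms(6) by (intro mult_right_mono) auto
    moreover have "b3 * z^2 = b3 * Q^2" using assms(1) by simp
    ultimately show ?thesis by linarith
  qed
  also have "\<dots> = b3 * Q * (2 * V - Q)" by (simp add: power2_eq_square algebra_simps)
  also have "\<dots> < 0" using assms(2,4,7) by (simp add: mult_pos_neg)
  finally show ?thesis .
qed

lemma cross_3:
  fixes x4 W v Q V Wm b4 d4 \<mu> I :: real
  assumes "(x4 - W)^2 = Q^2" "Q > 0" "Q \<le> 1" "\<bar>W\<bar> \<le> Wm" "\<bar>v\<bar> \<le> V" "b4 > 0" "d4 > 0" "0 \<le> \<mu>" "\<mu> \<le> b4/2"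
    "2 * d4 * (Wm + 1) * V < Q"
  shows "2 * (x4 - W) * (b4 * (I - x4 - d4 * x4 * v) - b4 * (I - W)) - 2 * Q * (- \<mu> * Q) < 0"
proof -
  define e where "e = x4 - W"
  have e2: "e^2 = Q^2" using assms(1) unfolding e_def .
  have ae: "\<bar>e\<bar> = Q" using sq_eq_abs[OF e2 assms(2)] .
  have ax4: "\<bar>x4\<bar> \<le> Wm + 1" using ae assms(3,4) unfolding e_def by linarith
  have "2 * (x4 - W) * (b4 * (I - x4 - d4 * x4 * v) - b4 * (I - W)) - 2 * Q * (- \<mu> * Q)
      = - 2 * (b4 * e^2) - 2 * (b4 * d4) * (e * x4 * v) + 2 * (\<mu> * Q^2)"
    unfolding e_def by (simp add: power2_eq_square algebra_simps)
  also have "\<dots> \<le> - 2 * (b4 * Q^2) + 2 * (b4 * d4) * (Q * (Wm + 1) * V) + 2 * ((b4/2) * Q^2)"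
  proof -
    have "\<bar>x4\<bar> * \<bar>v\<bar> \<le> (Wm + 1) * V" using ax4 assms(5) by (intro mult_mono) auto
    then have "\<bar>e\<bar> * (\<bar>x4\<bar> * \<bar>v\<bar>) \<le> \<bar>e\<bar> * ((Wm + 1) * V)" by (intro mult_left_mono) auto
    then have "\<bar>e * x4 * v\<bar> \<le> Q * (Wm + 1) * V" using ae by (simp add: abs_mult mult.assoc)
    then have "- (e * x4 * v) \<le> Q * (Wm + 1) * V" by linarith
    then have "(b4 * d4) * (- (e * x4 * v)) \<le> (b4 * d4) * (Q * (Wm + 1) * V)"
      using assms(6,7) by (intro mult_left_mono) auto
    moreover have "\<mu> * Q^2 \<le> (b4/2) * Q^2" using assms(9) by (intro mult_right_mono) auto
    moreover have "b4 * e^2 = b4 * Q^2" using e2 by simp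
    ultimately show ?thesis by linarith
  qed
  also have "\<dots> = b4 * Q * (2 * d4 * (Wm + 1) * V - Q)" by (simp add: power2_eq_square algebra_simps)
  also have "\<dots> < 0" using assms(2,6,10) by (simp add: mult_pos_neg)
  finally show ?thesis .
qed




lemma cross_u:
  fixes v x1 x4 B W b2 a2 d2 c Y Ae Af :: real
  assumes "v = B" "B > 0" "b2 > 0" "\<bar>v\<bar> \<le> Y" "\<bar>x1 - 1\<bar> \<le> Ae" "\<bar>x4 - W\<bar> \<le> Af" "a2 > 0" "d2 > 0"
    "b2 * (Y + a2 * Ae + d2 * Af) < c / 2" "c = b2 * (1 - a2 - d2)"
  shows "B * (c / 2 + b2 * d2 * (1 - W)) - b2 * v * (1 - v - a2 * x1 - d2 * x4) < 0"
proof -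
  have e: "B * (c / 2 + b2 * d2 * (1 - W)) - b2 * v * (1 - v - a2 * x1 - d2 * x4)
     = B * (- (c/2) + b2 * (v + a2 * (x1 - 1) + d2 * (x4 - W)))"
    unfolding assms(1) assms(10) by (simp add: algebra_simps)
  have "\<bar>v + a2 * (x1 - 1) + d2 * (x4 - W)\<bar> \<le> Y + a2 * Ae + d2 * Af"
  proof -
    have "\<bar>a2 * (x1 - 1)\<bar> \<le> a2 * Ae" using assms(5,7) by (simp add: abs_mult)
    moreover have "\<bar>d2 * (x4 - W)\<bar> \<le> d2 * Af" using assms(6,8) by (simp add: abs_mult)
    ultimately show ?thesis using assms(4) by linarith
  qed
  then have "b2 * \<bar>v + a2 * (x1 - 1) + d2 * (x4 - W)\<bar> \<le> b2 * (Y + a2 * Ae + d2 * Af)"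
    using assms(3) by (intro mult_left_mono) auto
  moreover have "b2 * (v + a2 * (x1 - 1) + d2 * (x4 - W)) \<le> b2 * \<bar>v + a2 * (x1 - 1) + d2 * (x4 - W)\<bar>"
    using assms(3) by (intro mult_left_mono) auto
  ultimately have "- (c/2) + b2 * (v + a2 * (x1 - 1) + d2 * (x4 - W)) < 0"
    using assms(9) by linarith
  then show ?thesis unfolding e using assms(2) by (simp add: mult_pos_neg)
qed



lemma norm4_le: "norm ((a::real), (b::real), (c::real), (d::real)) \<le> \<bar>a\<bar> + \<bar>b\<bar> + \<bar>c\<bar> + \<bar>d\<bar>"
proof -
  have "norm (a, b, c, d) \<le> norm a + norm (b, c, d)" by (rule norm_Pair_le)
  also have "norm (b, c, d) \<le> norm b + norm (c, d)" by (rule norm_Pair_le)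
  also have "norm (c, d) \<le> norm c + norm d" by (rule norm_Pair_le)
  finally show ?thesis by simp
qed

lemma norm4_ge: "\<bar>a\<bar> \<le> norm ((a::real), (b::real), (c::real), (d::real))"
  "\<bar>b\<bar> \<le> norm (a, b, c, d)" "\<bar>c\<bar> \<le> norm (a, b, c, d)" "\<bar>d\<bar> \<le> norm (a, b, c, d)"
proof -
  show "\<bar>a\<bar> \<le> norm (a, b, c, d)" using norm_fst_le[of a "(b,c,d)"] by simp
  have "norm (b,c,d) \<le> norm (a, b, c, d)" using norm_snd_le by blast
  moreover have "\<bar>b\<bar> \<le> norm (b,c,d)" using norm_fst_le[of b "(c,d)"] by simp
  moreover have "norm (c,d) \<le> norm (b, c, d)" using norm_snd_le by blast
  moreover have "\<bar>c\<bar> \<le> norm (c,d)" "\<bar>d\<bar> \<le> norm (c,d)" using norm_fst_le[of c d] norm_snd_le[of d c] by auto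
  ultimately show "\<bar>b\<bar> \<le> norm (a, b, c, d)" "\<bar>c\<bar> \<le> norm (a, b, c, d)" "\<bar>d\<bar> \<le> norm (a, b, c, d)" by linarith+
qed

lemma sysF_simp: "sysF a1 a2 b2 b3 b4 d1 d2 d4 i t (u1, u2, u3, u4) =
       (u1 * (1 - u1 - a1 * u2 - d1 * u3), b2 * u2 * (1 - u2 - a2 * u1 - d2 * u4),
        b3 * (u2 - u3), b4 * (i t - u4 - d4 * u4 * u2))"
  by (simp add: sysF_def)

lemma comp_derivs:
  fixes x :: "real \<Rightarrow> real \<times> real \<times> real \<times> real"
  assumes "(x has_vector_derivative (d1, d2, d3, d4)) F"
  shows "((\<lambda>s. fst (x s)) has_real_derivative d1) F"
    "((\<lambda>s. fst (snd (x s))) has_real_derivative d2) F"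
    "((\<lambda>s. fst (snd (snd (x s)))) has_real_derivative d3) F"
    "((\<lambda>s. snd (snd (snd (x s)))) has_real_derivative d4) F"
proof -
  have a: "((\<lambda>s. fst (x s)) has_vector_derivative d1) F"
    using bounded_linear.has_vector_derivative[OF bounded_linear_fst assms] by simp
  have b: "((\<lambda>s. snd (x s)) has_vector_derivative (d2, d3, d4)) F"
    using bounded_linear.has_vector_derivative[OF bounded_linear_snd assms] by simp
  have b1: "((\<lambda>s. fst (snd (x s))) has_vector_derivative d2) F"
    using bounded_linear.has_vector_derivative[OF bounded_linear_fst b] by simp
  have c: "((\<lambda>s. snd (snd (x s))) has_vector_derivative (d3, d4)) F"
    using bounded_linear.has_vector_derivative[OF bounded_linear_snd b] by simp
  have c1: "((\<lambda>s. fst (snd (snd (x s)))) has_vector_derivative d3) F"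
    using bounded_linear.has_vector_derivative[OF bounded_linear_fst c] by simp
  have c2: "((\<lambda>s. snd (snd (snd (x s)))) has_vector_derivative d4) F"
    using bounded_linear.has_vector_derivative[OF bounded_linear_snd c] by simp
  show "((\<lambda>s. fst (x s)) has_real_derivative d1) F"
    "((\<lambda>s. fst (snd (x s))) has_real_derivative d2) F"
    "((\<lambda>s. fst (snd (snd (x s)))) has_real_derivative d3) F"
    "((\<lambda>s. snd (snd (snd (x s)))) has_real_derivative d4) F"
    using a b1 c1 c2 by (simp_all add: has_real_derivative_iff_has_vector_derivative)
qed

context sys begin

abbreviation "F \<equiv> sysF a1 a2 b2 b3 b4 d1 d2 d4 i"
definition p :: "real \<Rightarrow> real \<times> real \<times> real \<times> real" where "p t = (1, 0, 0, w t)"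

lemma sol_derivs:
  fixes x :: "real \<Rightarrow> real \<times> real \<times> real \<times> real"
  assumes "solves_on F x S" "t \<in> S"
  defines "x1 \<equiv> \<lambda>s. fst (x s)" and "x2 \<equiv> \<lambda>s. fst (snd (x s))"
      and "x3 \<equiv> \<lambda>s. fst (snd (snd (x s)))" and "x4 \<equiv> \<lambda>s. snd (snd (snd (x s)))"
  shows "(x1 has_real_derivative x1 t * (1 - x1 t - a1 * x2 t - d1 * x3 t)) (at t within S)"
    "(x2 has_real_derivative b2 * x2 t * (1 - x2 t - a2 * x1 t - d2 * x4 t)) (at t within S)"
    "(x3 has_real_derivative b3 * (x2 t - x3 t)) (at t within S)"
    "(x4 has_real_derivative b4 * (i t - x4 t - d4 * x4 t * x2 t)) (at t within S)"
proof -
  have xt: "x t = (x1 t, x2 t, x3 t, x4 t)" by (simp add: x1_def x2_def x3_def x4_def)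
  have "(x has_vector_derivative F t (x t)) (at t within S)" using assms(1,2) unfolding solves_on_def by blast
  then have D: "(x has_vector_derivative (x1 t * (1 - x1 t - a1 * x2 t - d1 * x3 t), b2 * x2 t * (1 - x2 t - a2 * x1 t - d2 * x4 t),
        b3 * (x2 t - x3 t), b4 * (i t - x4 t - d4 * x4 t * x2 t))) (at t within S)"
    by (simp only: xt sysF_simp)
  show "(x1 has_real_derivative x1 t * (1 - x1 t - a1 * x2 t - d1 * x3 t)) (at t within S)"
    "(x2 has_real_derivative b2 * x2 t * (1 - x2 t - a2 * x1 t - d2 * x4 t)) (at t within S)"
    "(x3 has_real_derivative b3 * (x2 t - x3 t)) (at t within S)"
    "(x4 has_real_derivative b4 * (i t - x4 t - d4 * x4 t * x2 t)) (at t within S)"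
    using comp_derivs[OF D] unfolding x1_def x2_def x3_def x4_def by auto
qed

end


lemma sq_deriv:
  "(f has_real_derivative f') (at x within S) \<Longrightarrow> (g has_real_derivative g') (at x within S) \<Longrightarrow>
   ((\<lambda>s. (f s)^2 - (g s)^2) has_real_derivative 2 * f x * f' - 2 * g x * g') (at x within S)"
  by (auto intro!: derivative_eq_intros)

lemma sqle_abs: "(a::real)^2 - b^2 \<le> 0 \<Longrightarrow> 0 \<le> b \<Longrightarrow> \<bar>a\<bar> \<le> b"
  by (metis abs_le_square_iff abs_of_nonneg diff_le_0_iff_le)

lemma abs_sq_less: "\<bar>a::real\<bar> < b \<Longrightarrow> a^2 - b^2 < 0"
proof -
  assume h: "\<bar>a\<bar> < b"
  have "\<bar>a\<bar>^2 < b^2" using h by (intro power_strict_mono) auto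
  then show ?thesis by simp
qed

context sys begin

lemma x_minus_p: "x t - p t = (fst (x t) - 1, fst (snd (x t)), fst (snd (snd (x t))), snd (snd (snd (x t))) - w t)"
  by (simp add: p_def prod_eq_iff)

lemma stable_est:
  assumes a: "a2 + d2 > 1"
  shows "\<exists>\<eta>0>0. \<exists>K>0. \<exists>\<mu>>0. \<forall>\<eta> t0 T x t. 0 < \<eta> \<and> \<eta> \<le> \<eta>0 \<and> 0 \<le> t0 \<and> solves_on F x {t0..T} \<and>
      norm (x t0 - p t0) < \<eta> \<and> t \<in> {t0..T} \<longrightarrow> norm (x t - p t) \<le> K * \<eta> * exp (- \<mu> * (t - t0))"
proof -
  obtain Wm where Wm: "Wm \<ge> 0" "\<forall>t\<ge>0. \<bar>w t\<bar> \<le> Wm" using w_bound by blast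
  obtain Tm where Tm: "Tm \<ge> 0" "\<forall>t\<ge>0. \<bar>Th t\<bar> \<le> Tm" using Th_bound by blast
  define c where "c = b2 * (a2 + d2 - 1)"
  have c: "c > 0" unfolding c_def using a pos by simp
  define Lv where "Lv = exp (2 * b2 * d2 * Tm)"
  have Lv: "Lv \<ge> 1" unfolding Lv_def using pos Tm by simp
  define \<mu> where "\<mu> = min (min (c/2) (b3/2)) (min (1/4) (b4/2))"
  have \<mu>: "\<mu> > 0" "\<mu> \<le> c/2" "\<mu> \<le> b3/2" "\<mu> \<le> 1/4" "\<mu> \<le> b4/2" unfolding \<mu>_def using c pos by auto
  define Kz where "Kz = 2 * Lv + 1"
  define K1 where "K1 = 6 * (a1 * Lv + d1 * Kz) + 1"
  define K4 where "K4 = 2 * d4 * (Wm + 1) * Lv + 1"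
  have Kpos: "Kz \<ge> 1" "K1 \<ge> 1" "K4 \<ge> 1" unfolding Kz_def K1_def K4_def using Lv pos Wm by auto
  define S where "S = Lv + a2 * K1 + d2 * K4"
  have S: "S > 0" unfolding S_def using Lv Kpos pos by (simp add: add_pos_nonneg)
  define \<eta>0 where "\<eta>0 = min (min (1 / (2 * K1)) (1 / K4)) (c / (4 * b2 * S))"
  have \<eta>0: "\<eta>0 > 0" unfolding \<eta>0_def using Kpos c S pos by auto
  have \<eta>0b: "K1 * \<eta>0 \<le> 1/2" "K4 * \<eta>0 \<le> 1" "b2 * (\<eta>0 * S) \<le> c / 4"
  proof -
    have "\<eta>0 \<le> 1 / (2 * K1)" "\<eta>0 \<le> 1 / K4" "\<eta>0 \<le> c / (4 * b2 * S)" unfolding \<eta>0_def by auto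
    then show "K1 * \<eta>0 \<le> 1/2" "K4 * \<eta>0 \<le> 1" "b2 * (\<eta>0 * S) \<le> c / 4"
      using Kpos S pos by (auto simp: field_simps)
  qed
  define K where "K = K1 + Lv + Kz + K4"
  have K: "K > 0" unfolding K_def using Kpos Lv by simp
  have main: "norm (x t - p t) \<le> K * \<eta> * exp (- \<mu> * (t - t0))"
    if \<eta>: "0 < \<eta>" "\<eta> \<le> \<eta>0" and t0: "0 \<le> t0" and sol: "solves_on F x {t0..T}"
      and init: "norm (x t0 - p t0) < \<eta>" and t: "t \<in> {t0..T}" for \<eta> t0 T x t
  proof -
    define x1 where "x1 s = fst (x s)" for s
    define x2 where "x2 s = fst (snd (x s))" for s
    define x3 where "x3 s = fst (snd (snd (x s)))" for s
    define x4 where "x4 s = snd (snd (snd (x s)))" for s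
    have xmp: "x s - p s = (x1 s - 1, x2 s, x3 s, x4 s - w s)" for s
      unfolding x1_def x2_def x3_def x4_def by (rule x_minus_p)
    define E where "E s = exp (- \<mu> * (s - t0))" for s
    define Bv where "Bv s = \<eta> * exp (- (c/2) * (s - t0) + b2 * d2 * (Th s - Th t0))" for s
    have Epos: "E s > 0" for s unfolding E_def by simp
    have Ele1: "E s \<le> 1" if "s \<ge> t0" for s unfolding E_def using that \<mu> by simp
    have Bvpos: "Bv s > 0" for s unfolding Bv_def using \<eta> by simp
    have Bvle: "Bv s \<le> Lv * \<eta> * E s" if s: "s \<ge> t0" for s
    proof -
      have "- (c/2) * (s - t0) \<le> - \<mu> * (s - t0)" using s \<mu> by (intro mult_right_mono) auto
      moreover have "b2 * d2 * (Th s - Th t0) \<le> b2 * d2 * (2 * Tm)"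
      proof -
        have "\<bar>Th s\<bar> \<le> Tm" "\<bar>Th t0\<bar> \<le> Tm" using Tm s t0 by auto
        then have "Th s - Th t0 \<le> 2 * Tm" by linarith
        then show ?thesis using pos by (intro mult_left_mono) auto
      qed
      ultimately have "- (c/2) * (s - t0) + b2 * d2 * (Th s - Th t0) \<le> 2 * b2 * d2 * Tm + - \<mu> * (s - t0)" by simp
      then have "exp (- (c/2) * (s - t0) + b2 * d2 * (Th s - Th t0)) \<le> exp (2 * b2 * d2 * Tm + - \<mu> * (s - t0))" by simp
      also have "exp (2 * b2 * d2 * Tm + - \<mu> * (s - t0)) = Lv * E s" unfolding Lv_def E_def using exp_add[of "2 * b2 * d2 * Tm" "- \<mu> * (s - t0)"] by simp
      finally have "exp (- (c/2) * (s - t0) + b2 * d2 * (Th s - Th t0)) \<le> Lv * E s" .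
      then have "\<eta> * exp (- (c/2) * (s - t0) + b2 * d2 * (Th s - Th t0)) \<le> \<eta> * (Lv * E s)"
        using \<eta> by (intro mult_left_mono) auto
      then show ?thesis unfolding Bv_def by (simp add: mult.assoc mult.left_commute)
    qed
    show ?thesis
    proof (cases "t0 \<le> T")
      case False then show ?thesis using t by simp
    next
      case True
      define \<phi> where "\<phi> j s = (if j = (0::nat) then (x2 s)^2 - (Bv s)^2 else if j = 1 then (x1 s - 1)^2 - (K1 * \<eta> * E s)^2
          else if j = 2 then (x3 s)^2 - (Kz * \<eta> * E s)^2 else (x4 s - w s)^2 - (K4 * \<eta> * E s)^2)" for j s
      define q0 where "q0 s = 2 * x2 s * (b2 * x2 s * (1 - x2 s - a2 * x1 s - d2 * x4 s)) - 2 * Bv s * (Bv s * (- (c / 2) + b2 * d2 * (1 - w s)))" for s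
      define q1 where "q1 s = 2 * (x1 s - 1) * (x1 s * (1 - x1 s - a1 * x2 s - d1 * x3 s)) - 2 * (K1 * \<eta> * E s) * (- \<mu> * (K1 * \<eta> * E s))" for s
      define q2 where "q2 s = 2 * x3 s * (b3 * (x2 s - x3 s)) - 2 * (Kz * \<eta> * E s) * (- \<mu> * (Kz * \<eta> * E s))" for s
      define q3 where "q3 s = 2 * (x4 s - w s) * (b4 * (i s - x4 s - d4 * x4 s * x2 s) - b4 * (i s - w s)) - 2 * (K4 * \<eta> * E s) * (- \<mu> * (K4 * \<eta> * E s))" for s
      define \<phi>' where "\<phi>' j s = (if j = (0::nat) then q0 s else if j = 1 then q1 s else if j = 2 then q2 s else q3 s)" for j s
      have neg: "\<forall>j\<in>{0..3}. \<forall>s\<in>{t0..T}. \<phi> j s < 0"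
      proof (rule barrier[OF _ True])
        show "finite {0..3::nat}" by simp
        fix j s assume j: "j \<in> {0..3::nat}" and s: "s \<in> {t0..T}"
        have dx: "(x1 has_real_derivative x1 s * (1 - x1 s - a1 * x2 s - d1 * x3 s)) (at s within {t0..T})"
          "(x2 has_real_derivative b2 * x2 s * (1 - x2 s - a2 * x1 s - d2 * x4 s)) (at s within {t0..T})"
          "(x3 has_real_derivative b3 * (x2 s - x3 s)) (at s within {t0..T})"
          "(x4 has_real_derivative b4 * (i s - x4 s - d4 * x4 s * x2 s)) (at s within {t0..T})"
          using sol_derivs[OF sol s] unfolding x1_def x2_def x3_def x4_def by (auto simp: fun_eq_iff)
        have dw: "(w has_real_derivative b4 * (i s - w s)) (at s within {t0..T})" by (rule w_deriv[OF t0 s])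
        have dTh: "(Th has_real_derivative 1 - w s) (at s within {t0..T})" by (rule Th_deriv[OF t0 s])
        have dQ: "((\<lambda>s. C * \<eta> * E s) has_real_derivative (- \<mu> * (C * \<eta> * E s))) (at s within {t0..T})" for C
          unfolding E_def by (auto intro!: derivative_eq_intros)
        have dBv: "(Bv has_real_derivative Bv s * (- (c / 2) + b2 * d2 * (1 - w s))) (at s within {t0..T})"
          unfolding Bv_def by (auto intro!: derivative_eq_intros dTh)
        have d1m: "((\<lambda>s. x1 s - 1) has_real_derivative x1 s * (1 - x1 s - a1 * x2 s - d1 * x3 s)) (at s within {t0..T})"
          using dx(1) by (auto intro!: derivative_eq_intros)
        have d4m: "((\<lambda>s. x4 s - w s) has_real_derivative b4 * (i s - x4 s - d4 * x4 s * x2 s) - b4 * (i s - w s)) (at s within {t0..T})"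
          using dx(4) dw by (auto intro!: derivative_eq_intros)
        have "j = 0 \<or> j = 1 \<or> j = 2 \<or> j = 3" using j by auto
        then show "(\<phi> j has_real_derivative \<phi>' j s) (at s within {t0..T})"
        proof (elim disjE)
          assume "j = 0" then show ?thesis unfolding \<phi>_def \<phi>'_def q0_def using sq_deriv[OF dx(2) dBv] by simp
        next
          assume "j = 1" then show ?thesis unfolding \<phi>_def \<phi>'_def q1_def using sq_deriv[OF d1m dQ[of K1]] by simp
        next
          assume "j = 2" then show ?thesis unfolding \<phi>_def \<phi>'_def q2_def using sq_deriv[OF dx(3) dQ[of Kz]] by simp
        next
          assume "j = 3" then show ?thesis unfolding \<phi>_def \<phi>'_def q3_def using sq_deriv[OF d4m dQ[of K4]] by simp
        qed
      next
        fix j assume j: "j \<in> {0..3::nat}"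
        have E0: "E t0 = 1" and B0: "Bv t0 = \<eta>" unfolding E_def Bv_def by simp_all
        have n: "norm (x1 t0 - 1, x2 t0, x3 t0, x4 t0 - w t0) < \<eta>" using init xmp by simp
        note nb = norm4_ge[where a="x1 t0 - 1" and b="x2 t0" and c="x3 t0" and d="x4 t0 - w t0"]
        have b: "\<bar>x1 t0 - 1\<bar> < \<eta>" "\<bar>x2 t0\<bar> < \<eta>" "\<bar>x3 t0\<bar> < \<eta>" "\<bar>x4 t0 - w t0\<bar> < \<eta>"
          using nb(1) n apply linarith using nb(2) n apply linarith using nb(3) n apply linarith using nb(4) n by linarith
        have le: "\<eta> \<le> C * \<eta>" if "C \<ge> 1" for C using that \<eta> by simp
        have "j = 0 \<or> j = 1 \<or> j = 2 \<or> j = 3" using j by auto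
        then show "\<phi> j t0 < 0"
        proof (elim disjE)
          assume "j = 0" then show ?thesis unfolding \<phi>_def using abs_sq_less[OF b(2)] B0 by simp
        next
          assume "j = 1" then show ?thesis unfolding \<phi>_def E0 using abs_sq_less[of "x1 t0 - 1" "K1 * \<eta>"] b(1) le[OF Kpos(2)] by simp
        next
          assume "j = 2" then show ?thesis unfolding \<phi>_def E0 using abs_sq_less[of "x3 t0" "Kz * \<eta>"] b(3) le[OF Kpos(1)] by simp
        next
          assume "j = 3" then show ?thesis unfolding \<phi>_def E0 using abs_sq_less[of "x4 t0 - w t0" "K4 * \<eta>"] b(4) le[OF Kpos(3)] by simp
        qed
      next
        fix j s assume j: "j \<in> {0..3::nat}" and s: "s \<in> {t0..T}" and all: "\<forall>k\<in>{0..3}. \<phi> k s \<le> 0" and z: "\<phi> j s = 0"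
        have st: "s \<ge> t0" "s \<ge> 0" using s t0 by auto
        have EP: "\<eta> * E s > 0" using \<eta> Epos by simp
        have p0: "\<phi> 0 s \<le> 0" "\<phi> 1 s \<le> 0" "\<phi> 2 s \<le> 0" "\<phi> 3 s \<le> 0" using all by auto
        have bx2: "\<bar>x2 s\<bar> \<le> Lv * \<eta> * E s"
          using sqle_abs[of "x2 s" "Bv s"] p0(1) Bvpos[of s] Bvle[OF st(1)] unfolding \<phi>_def by simp
        have bx1: "\<bar>x1 s - 1\<bar> \<le> K1 * \<eta> * E s"
          using sqle_abs[of "x1 s - 1" "K1 * \<eta> * E s"] p0(2) Kpos EP \<eta> Epos[of s] unfolding \<phi>_def by simp
        have bx3: "\<bar>x3 s\<bar> \<le> Kz * \<eta> * E s"
          using sqle_abs[of "x3 s" "Kz * \<eta> * E s"] p0(3) Kpos EP \<eta> Epos[of s] unfolding \<phi>_def by simp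
        have bx4: "\<bar>x4 s - w s\<bar> \<le> K4 * \<eta> * E s"
          using sqle_abs[of "x4 s - w s" "K4 * \<eta> * E s"] p0(4) Kpos EP \<eta> Epos[of s] unfolding \<phi>_def by simp
        have Es: "E s \<le> 1" using Ele1[OF st(1)] .
        have QP: "0 < K1 * \<eta> * E s" "0 < Kz * \<eta> * E s" "0 < K4 * \<eta> * E s"
          using Kpos EP by (simp_all add: mult.assoc)
        have le_drop: "C * \<eta> * E s \<le> C * \<eta>" if "C \<ge> 0" for C
          using Es that \<eta> by (simp add: mult_left_le)
        have "j = 0 \<or> j = 1 \<or> j = 2 \<or> j = 3" using j by auto
        then show "\<phi>' j s < 0"
        proof (elim disjE)
          assume j0: "j = 0"
          have "b2 * (Lv * \<eta> + a2 * (K1 * \<eta>) + d2 * (K4 * \<eta>)) < c / 2"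
          proof -
            have "b2 * (Lv * \<eta> + a2 * (K1 * \<eta>) + d2 * (K4 * \<eta>)) = b2 * (\<eta> * S)" unfolding S_def by (simp add: algebra_simps)
            also have "\<dots> \<le> b2 * (\<eta>0 * S)" using \<eta> S pos by (intro mult_left_mono mult_right_mono) auto
            also have "\<dots> < c / 2" using \<eta>0b c by simp
            finally show ?thesis .
          qed
          moreover have "(x2 s)^2 = (Bv s)^2" using z j0 unfolding \<phi>_def by simp
          moreover have ek: "\<phi>' j s = q0 s" using j0 unfolding \<phi>'_def by simp
          ultimately have "q0 s < 0" unfolding q0_def
            by (intro cross_v[where Y = "Lv * \<eta>" and Ae = "K1 * \<eta>" and Af = "K4 * \<eta>"])
              (use Bvpos pos bx2 bx1 bx4 le_drop Lv Kpos c_def in \<open>auto intro: order_trans\<close>)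
          then show ?thesis using ek by simp
        next
          assume j1: "j = 1"
          have Q: "K1 * \<eta> * E s \<le> 1/2"
            using le_drop[of K1] Kpos \<eta>0b \<eta> by (smt (verit) mult_left_mono)
          have "3 * (a1 * (Lv * \<eta> * E s) + d1 * (Kz * \<eta> * E s)) < (K1 * \<eta> * E s) / 2"
          proof -
            have "3 * (a1 * (Lv * \<eta> * E s) + d1 * (Kz * \<eta> * E s)) = (3 * (a1 * Lv + d1 * Kz)) * (\<eta> * E s)" by (simp add: algebra_simps)
            also have "\<dots> < (K1 / 2) * (\<eta> * E s)" using EP unfolding K1_def by (intro mult_strict_right_mono) auto
            finally show ?thesis by simp
          qed
          moreover have "(x1 s - 1)^2 = (K1 * \<eta> * E s)^2" using z j1 unfolding \<phi>_def by simp
          moreover have ek: "\<phi>' j s = q1 s" using j1 unfolding \<phi>'_def by simp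
          ultimately have "q1 s < 0" unfolding q1_def
            by (intro cross_1[where V = "Lv * \<eta> * E s" and Z = "Kz * \<eta> * E s"])
              (use QP Q bx2 bx3 pos \<mu> EP Kpos in \<open>auto intro: mult_pos_pos\<close>)
          then show ?thesis using ek by simp
        next
          assume j2: "j = 2"
          have "2 * (Lv * \<eta> * E s) < Kz * \<eta> * E s"
          proof -
            have "2 * (Lv * \<eta> * E s) = (2 * Lv) * (\<eta> * E s)" by simp
            also have "\<dots> < Kz * (\<eta> * E s)" using EP unfolding Kz_def by (intro mult_strict_right_mono) auto
            finally show ?thesis by simp
          qed
          moreover have "(x3 s)^2 = (Kz * \<eta> * E s)^2" using z j2 unfolding \<phi>_def by simp
          moreover have ek: "\<phi>' j s = q2 s" using j2 unfolding \<phi>'_def by simp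
          ultimately have "q2 s < 0" unfolding q2_def
            by (intro cross_2[where V = "Lv * \<eta> * E s"])
              (use QP bx2 pos \<mu> EP Kpos in \<open>auto intro: mult_pos_pos\<close>)
          then show ?thesis using ek by simp
        next
          assume j3: "j = 3"
          have Q: "K4 * \<eta> * E s \<le> 1"
            using le_drop[of K4] Kpos \<eta>0b \<eta> by (smt (verit) mult_left_mono)
          have "2 * d4 * (Wm + 1) * (Lv * \<eta> * E s) < K4 * \<eta> * E s"
          proof -
            have "2 * d4 * (Wm + 1) * (Lv * \<eta> * E s) = (2 * d4 * (Wm + 1) * Lv) * (\<eta> * E s)" by simp
            also have "\<dots> < K4 * (\<eta> * E s)" using EP unfolding K4_def by (intro mult_strict_right_mono) auto
            finally show ?thesis by simp
          qed
          moreover have "(x4 s - w s)^2 = (K4 * \<eta> * E s)^2" using z j3 unfolding \<phi>_def by simp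
          moreover have "\<bar>w s\<bar> \<le> Wm" using Wm st by auto
          moreover have ek: "\<phi>' j s = q3 s" using j3 unfolding \<phi>'_def by simp
          ultimately have "q3 s < 0" unfolding q3_def
            by (intro cross_3[where V = "Lv * \<eta> * E s" and Wm = Wm])
              (use QP Q bx2 pos \<mu> EP Kpos in \<open>auto intro: mult_pos_pos\<close>)
          then show ?thesis using ek by simp
        qed
      qed
      have tt: "t \<ge> t0" using t by simp
      have p: "\<phi> 0 t < 0" "\<phi> 1 t < 0" "\<phi> 2 t < 0" "\<phi> 3 t < 0" using neg t by auto
      have EP: "\<eta> * E t > 0" using \<eta> Epos by simp
      have bx2: "\<bar>x2 t\<bar> \<le> Lv * \<eta> * E t"
        using sqle_abs[of "x2 t" "Bv t"] p(1) Bvpos[of t] Bvle[OF tt] unfolding \<phi>_def by simp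
      have bx1: "\<bar>x1 t - 1\<bar> \<le> K1 * \<eta> * E t"
        using sqle_abs[of "x1 t - 1" "K1 * \<eta> * E t"] p(2) Kpos EP \<eta> Epos[of t] unfolding \<phi>_def by simp
      have bx3: "\<bar>x3 t\<bar> \<le> Kz * \<eta> * E t"
        using sqle_abs[of "x3 t" "Kz * \<eta> * E t"] p(3) Kpos EP \<eta> Epos[of t] unfolding \<phi>_def by simp
      have bx4: "\<bar>x4 t - w t\<bar> \<le> K4 * \<eta> * E t"
        using sqle_abs[of "x4 t - w t" "K4 * \<eta> * E t"] p(4) Kpos EP \<eta> Epos[of t] unfolding \<phi>_def by simp
      have "norm (x t - p t) \<le> \<bar>x1 t - 1\<bar> + \<bar>x2 t\<bar> + \<bar>x3 t\<bar> + \<bar>x4 t - w t\<bar>"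
        unfolding xmp by (rule norm4_le)
      also have "\<dots> \<le> K1 * \<eta> * E t + Lv * \<eta> * E t + Kz * \<eta> * E t + K4 * \<eta> * E t"
        using bx1 bx2 bx3 bx4 by linarith
      also have "\<dots> = K * \<eta> * exp (- \<mu> * (t - t0))" unfolding K_def E_def by (simp add: algebra_simps)
      finally show ?thesis .
    qed
  qed
  show ?thesis using \<eta>0 K \<mu>(1) main by blast
qed

end


definition clp :: "real \<Rightarrow> real \<Rightarrow> real" where "clp K y = max (- K) (min K y)"
definition cl4 :: "real \<Rightarrow> real \<times> real \<times> real \<times> real \<Rightarrow> real \<times> real \<times> real \<times> real" where
  "cl4 K u = (clp K (fst u), clp K (fst (snd u)), clp K (fst (snd (snd u))), clp K (snd (snd (snd u))))"

lemma clp_bound: "0 \<le> K \<Longrightarrow> \<bar>clp K y\<bar> \<le> K" by (auto simp: clp_def)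
lemma clp_lip: "0 \<le> K \<Longrightarrow> \<bar>clp K y - clp K z\<bar> \<le> \<bar>y - z\<bar>" by (auto simp: clp_def max_def min_def)
lemma clp_id: "\<bar>y\<bar> \<le> K \<Longrightarrow> clp K y = y" by (auto simp: clp_def)
lemma cont_clp: "continuous_on S f \<Longrightarrow> continuous_on S (\<lambda>s. clp K (f s))"
  unfolding clp_def by (intro continuous_intros)

lemma prod_lip: "\<bar>p\<bar> \<le> K \<Longrightarrow> \<bar>q'\<bar> \<le> K \<Longrightarrow> \<bar>p - p'\<bar> \<le> n \<Longrightarrow> \<bar>q - q'\<bar> \<le> n \<Longrightarrow> \<bar>p * q - p' * q' :: real\<bar> \<le> 2 * K * n"
proof -
  assume h: "\<bar>p\<bar> \<le> K" "\<bar>q'\<bar> \<le> K" "\<bar>p - p'\<bar> \<le> n" "\<bar>q - q'\<bar> \<le> n"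
  have "p * q - p' * q' = p * (q - q') + q' * (p - p')" by (simp add: algebra_simps)
  then have "\<bar>p * q - p' * q'\<bar> \<le> \<bar>p\<bar> * \<bar>q - q'\<bar> + \<bar>q'\<bar> * \<bar>p - p'\<bar>" by (simp add: abs_mult[symmetric] abs_triangle_ineq)
  also have "\<dots> \<le> K * n + K * n" using h by (intro add_mono mult_mono) auto
  finally show ?thesis by simp
qed

lemma abs_scale: "0 \<le> (al::real) \<Longrightarrow> \<bar>C\<bar> \<le> m \<Longrightarrow> \<bar>al * C\<bar> \<le> al * m"
  by (simp add: abs_mult mult_left_mono)

lemma lin4:
  fixes A B C D al be :: real
  assumes "\<bar>A\<bar> \<le> n1" "\<bar>B\<bar> \<le> n2" "\<bar>C\<bar> \<le> n3" "\<bar>D\<bar> \<le> n4" "0 \<le> al" "0 \<le> be"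
  shows "\<bar>A - B - al * C - be * D\<bar> \<le> n1 + n2 + al * n3 + be * n4"
proof -
  have "\<bar>al * C\<bar> \<le> al * n3" "\<bar>be * D\<bar> \<le> be * n4" using assms abs_scale by auto
  then show ?thesis using assms(1,2) unfolding abs_le_iff by linarith
qed

lemma tuple4: obtains a b c d where "u = (a, b, c, d)" by (metis prod.collapse)

context sys begin

lemma G_lip:
  assumes K: "0 \<le> K"
  shows "\<exists>L\<ge>0. \<forall>t u v. norm (F t (cl4 K u) - F t (cl4 K v)) \<le> L * norm (u - v)"
proof -
  define L where "L = (1 + 2*K + a1*(2*K) + d1*(2*K)) + b2 * (1 + 2*K + a2*(2*K) + d2*(2*K)) + b3 * 2 + b4 * (1 + d4 * (2*K))"
  have L: "L \<ge> 0" unfolding L_def using K pos by (intro add_nonneg_nonneg mult_nonneg_nonneg) auto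
  have "norm (F t (cl4 K u) - F t (cl4 K v)) \<le> L * norm (u - v)" for t u v
  proof -
    obtain u1 u2 u3 u4 where u: "u = (u1, u2, u3, u4)" by (rule tuple4)
    obtain v1 v2 v3 v4 where v: "v = (v1, v2, v3, v4)" by (rule tuple4)
    define n where "n = norm (u - v)"
    have uv: "u - v = (u1 - v1, u2 - v2, u3 - v3, u4 - v4)" using u v by simp
    have dn: "\<bar>u1 - v1\<bar> \<le> n" "\<bar>u2 - v2\<bar> \<le> n" "\<bar>u3 - v3\<bar> \<le> n" "\<bar>u4 - v4\<bar> \<le> n"
      unfolding n_def uv by (rule norm4_ge)+
    define p1 where "p1 = clp K u1" define p2 where "p2 = clp K u2" define p3 where "p3 = clp K u3" define p4 where "p4 = clp K u4"
    define q1 where "q1 = clp K v1" define q2 where "q2 = clp K v2" define q3 where "q3 = clp K v3" define q4 where "q4 = clp K v4"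
    have bp: "\<bar>p1\<bar> \<le> K" "\<bar>p2\<bar> \<le> K" "\<bar>p3\<bar> \<le> K" "\<bar>p4\<bar> \<le> K" "\<bar>q1\<bar> \<le> K" "\<bar>q2\<bar> \<le> K" "\<bar>q3\<bar> \<le> K" "\<bar>q4\<bar> \<le> K"
      unfolding p1_def p2_def p3_def p4_def q1_def q2_def q3_def q4_def using clp_bound[OF K] by auto
    have dp: "\<bar>p1 - q1\<bar> \<le> n" "\<bar>p2 - q2\<bar> \<le> n" "\<bar>p3 - q3\<bar> \<le> n" "\<bar>p4 - q4\<bar> \<le> n"
      unfolding p1_def p2_def p3_def p4_def q1_def q2_def q3_def q4_def
      using clp_lip[OF K] dn by (meson order_trans)+
    have cu: "cl4 K u = (p1, p2, p3, p4)" "cl4 K v = (q1, q2, q3, q4)"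
      unfolding cl4_def u v p1_def p2_def p3_def p4_def q1_def q2_def q3_def q4_def by simp_all
    define D1 where "D1 = p1 * (1 - p1 - a1 * p2 - d1 * p3) - q1 * (1 - q1 - a1 * q2 - d1 * q3)"
    define D2 where "D2 = b2 * p2 * (1 - p2 - a2 * p1 - d2 * p4) - b2 * q2 * (1 - q2 - a2 * q1 - d2 * q4)"
    define D3 where "D3 = b3 * (p2 - p3) - b3 * (q2 - q3)"
    define D4 where "D4 = b4 * (i t - p4 - d4 * p4 * p2) - b4 * (i t - q4 - d4 * q4 * q2)"
    have FD: "F t (cl4 K u) - F t (cl4 K v) = (D1, D2, D3, D4)"
      unfolding cu sysF_simp D1_def D2_def D3_def D4_def by simp
    have m11: "\<bar>p1 * p1 - q1 * q1\<bar> \<le> 2 * K * n" using prod_lip bp dp by blast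
    have m12: "\<bar>p1 * p2 - q1 * q2\<bar> \<le> 2 * K * n" using prod_lip bp dp by blast
    have m13: "\<bar>p1 * p3 - q1 * q3\<bar> \<le> 2 * K * n" using prod_lip bp dp by blast
    have m22: "\<bar>p2 * p2 - q2 * q2\<bar> \<le> 2 * K * n" using prod_lip bp dp by blast
    have m21: "\<bar>p2 * p1 - q2 * q1\<bar> \<le> 2 * K * n" using prod_lip bp dp by blast
    have m24: "\<bar>p2 * p4 - q2 * q4\<bar> \<le> 2 * K * n" using prod_lip bp dp by blast
    have m42: "\<bar>p4 * p2 - q4 * q2\<bar> \<le> 2 * K * n" using prod_lip bp dp by blast
    have "D1 = (p1 - q1) - (p1 * p1 - q1 * q1) - a1 * (p1 * p2 - q1 * q2) - d1 * (p1 * p3 - q1 * q3)"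
      unfolding D1_def by (simp add: algebra_simps)
    then have b1: "\<bar>D1\<bar> \<le> n + 2*K*n + a1 * (2*K*n) + d1 * (2*K*n)"
      using lin4[OF dp(1) m11 m12 m13] pos by simp
    have "D2 = b2 * ((p2 - q2) - (p2 * p2 - q2 * q2) - a2 * (p2 * p1 - q2 * q1) - d2 * (p2 * p4 - q2 * q4))"
      unfolding D2_def by (simp add: algebra_simps)
    moreover have "\<bar>(p2 - q2) - (p2 * p2 - q2 * q2) - a2 * (p2 * p1 - q2 * q1) - d2 * (p2 * p4 - q2 * q4)\<bar> \<le> n + 2*K*n + a2 * (2*K*n) + d2 * (2*K*n)"
      using lin4[OF dp(2) m22 m21 m24] pos by simp
    ultimately have b2': "\<bar>D2\<bar> \<le> b2 * (n + 2*K*n + a2 * (2*K*n) + d2 * (2*K*n))"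
      using pos abs_scale by simp
    have "D3 = b3 * ((p2 - q2) - (p3 - q3))" unfolding D3_def by (simp add: algebra_simps)
    moreover have "\<bar>(p2 - q2) - (p3 - q3)\<bar> \<le> 2 * n" using dp by linarith
    ultimately have b3': "\<bar>D3\<bar> \<le> b3 * (2 * n)" using pos abs_scale by simp
    have "D4 = b4 * (- (p4 - q4) - d4 * (p4 * p2 - q4 * q2))" unfolding D4_def by (simp add: algebra_simps)
    moreover have "\<bar>- (p4 - q4) - d4 * (p4 * p2 - q4 * q2)\<bar> \<le> n + d4 * (2*K*n)"
    proof -
      have "\<bar>d4 * (p4 * p2 - q4 * q2)\<bar> \<le> d4 * (2*K*n)" using abs_scale m42 pos by simp
      then show ?thesis using dp(4) unfolding abs_le_iff by linarith
    qed
    ultimately have b4': "\<bar>D4\<bar> \<le> b4 * (n + d4 * (2*K*n))" using pos abs_scale by simp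
    have "norm (F t (cl4 K u) - F t (cl4 K v)) \<le> \<bar>D1\<bar> + \<bar>D2\<bar> + \<bar>D3\<bar> + \<bar>D4\<bar>" unfolding FD by (rule norm4_le)
    also have "\<dots> \<le> (n + 2*K*n + a1 * (2*K*n) + d1 * (2*K*n)) + b2 * (n + 2*K*n + a2 * (2*K*n) + d2 * (2*K*n)) + b3 * (2 * n) + b4 * (n + d4 * (2*K*n))"
      using b1 b2' b3' b4' by linarith
    also have "\<dots> = L * n" unfolding L_def by (simp add: algebra_simps)
    finally show ?thesis unfolding n_def .
  qed
  then show ?thesis using L by blast
qed

lemma sysF_alt: "F t u = (fst u * (1 - fst u - a1 * fst (snd u) - d1 * fst (snd (snd u))),
   b2 * fst (snd u) * (1 - fst (snd u) - a2 * fst u - d2 * snd (snd (snd u))),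
   b3 * (fst (snd u) - fst (snd (snd u))),
   b4 * (i t - snd (snd (snd u)) - d4 * snd (snd (snd u)) * fst (snd u)))"
  by (cases u) (auto simp: sysF_simp split: prod.splits)

lemma G_cont:
  assumes "0 \<le> a" "continuous_on {a..b} f"
  shows "continuous_on {a..b} (\<lambda>s. F s (cl4 K (f s)))"
proof -
  have ic: "continuous_on {a..b} i" using continuous_on_subset[OF i_cont] assms(1) by auto
  show ?thesis unfolding sysF_alt cl4_def
    by (intro continuous_intros cont_clp ic assms(2))
qed

end


lemma first_exit:
  fixes g :: "real \<Rightarrow> real"
  assumes c: "continuous_on {t0..} g" and g0: "g t0 < r" and t1: "t1 \<ge> t0" "g t1 \<ge> r"
  shows "\<exists>T. t0 < T \<and> T \<le> t1 \<and> g T = r \<and> (\<forall>s\<in>{t0..<T}. g s < r)"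
proof -
  define S where "S = {t\<in>{t0..t1}. r \<le> g t}"
  have cont: "continuous_on {t0..t1} g" using continuous_on_subset[OF c] by auto
  have clS: "closed S" unfolding S_def by (intro continuous_on_closed_Collect_le cont continuous_intros)
  have neS: "S \<noteq> {}" using t1 unfolding S_def by auto
  have bdd: "bdd_below S" unfolding S_def by (rule bdd_belowI[of _ t0]) auto
  define T where "T = Inf S"
  have TS: "T \<in> S" unfolding T_def using closed_contains_Inf[OF neS bdd clS] .
  have Tab: "T \<in> {t0..t1}" "r \<le> g T" using TS unfolding S_def by auto
  have below: "g s < r" if "s \<in> {t0..t1}" "s < T" for s
  proof (rule ccontr)
    assume "\<not> g s < r"
    then have "s \<in> S" using that unfolding S_def by auto
    then have "T \<le> s" unfolding T_def by (simp add: bdd cInf_lower)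
    then show False using that by simp
  qed
  have Ta: "t0 < T" using Tab g0 by (cases "T = t0") auto
  have "g T \<le> r"
  proof (rule ccontr)
    assume "\<not> g T \<le> r"
    then have pos: "g T - r > 0" by simp
    have "continuous (at T within {t0..t1}) g"
      using cont Tab continuous_on_eq_continuous_within by blast
    then obtain d where d: "d > 0" "\<And>t. t\<in>{t0..t1} \<Longrightarrow> dist t T < d \<Longrightarrow> dist (g t) (g T) < g T - r"
      using pos unfolding continuous_within_eps_delta by blast
    define m where "m = min d (T - t0)"
    have m: "0 < m" "m \<le> d" "m \<le> T - t0" using d(1) Ta by (auto simp: m_def)
    define t where "t = T - m / 2"
    have "t \<in> {t0..t1}" "dist t T < d" "t < T" using m Tab unfolding t_def dist_real_def by auto
    then have "dist (g t) (g T) < g T - r" "g t < r" using d below by auto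
    then show False unfolding dist_real_def by auto
  qed
  then have "g T = r" using Tab by simp
  moreover have "\<forall>s\<in>{t0..<T}. g s < r" using below Tab by auto
  ultimately show ?thesis using Ta Tab by auto
qed

context sys begin

lemma exists_trunc:
  assumes K: "0 \<le> K" and t0: "0 \<le> t0"
  shows "\<exists>X. X t0 = x0 \<and> solves_on (\<lambda>t u. F t (cl4 K u)) X {t0..}"
proof -
  obtain L where L: "L \<ge> 0" "\<forall>t u v. norm (F t (cl4 K u) - F t (cl4 K v)) \<le> L * norm (u - v)"
    using G_lip[OF K] by blast
  have "\<exists>x. x t0 = x0 \<and> (\<forall>t\<ge>t0. (x has_vector_derivative F t (cl4 K (x t))) (at t within {t0..}))"
  proof (rule picard_global[OF L(1)])
    show "continuous_on {a..b} (\<lambda>s. F s (cl4 K (f s)))" if "t0 \<le> a" "continuous_on {a..b} f" for f a b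
      using G_cont[of a b f K] that t0 by auto
    show "norm (F t (cl4 K u) - F t (cl4 K v)) \<le> L * norm (u - v)" for t u v using L by blast
  qed
  then show ?thesis unfolding solves_on_def by auto
qed

lemma box:
  assumes "norm (u - p t) \<le> 1" "\<bar>w t\<bar> \<le> Wm"
  shows "cl4 (Wm + 2) u = u"
proof -
  obtain u1 u2 u3 u4 where u: "u = (u1, u2, u3, u4)" by (rule tuple4)
  have "u - p t = (u1 - 1, u2, u3, u4 - w t)" unfolding u p_def by simp
  then have n: "norm (u1 - 1, u2, u3, u4 - w t) \<le> 1" using assms(1) by simp
  have b: "\<bar>u1 - 1\<bar> \<le> 1" "\<bar>u2\<bar> \<le> 1" "\<bar>u3\<bar> \<le> 1" "\<bar>u4 - w t\<bar> \<le> 1"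
    using norm4_ge[where a="u1 - 1" and b=u2 and c=u3 and d="u4 - w t"] n by linarith+
  then have "\<bar>u1\<bar> \<le> Wm + 2" "\<bar>u2\<bar> \<le> Wm + 2" "\<bar>u3\<bar> \<le> Wm + 2" "\<bar>u4\<bar> \<le> Wm + 2"
    using assms(2) by linarith+
  then show ?thesis unfolding u cl4_def by (simp add: clp_id)
qed

lemma p_cont: "continuous_on {0..} p"
  unfolding p_def using w_cont by (intro continuous_intros)

lemma unstable_est:
  assumes a: "a2 + d2 < 1"
  shows "\<exists>\<epsilon>>0. \<epsilon> \<le> 1 \<and> (\<exists>\<kappa>>0. \<exists>C>0. \<forall>x T t. solves_on F x {0..T} \<and> fst (snd (x 0)) > 0 \<and>
      (\<forall>s\<in>{0..T}. norm (x s - p s) \<le> \<epsilon>) \<and> t \<in> {0..T} \<longrightarrow> fst (snd (x t)) \<ge> fst (snd (x 0)) * C * exp (\<kappa> * t))"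
proof -
  obtain Wm where Wm: "Wm \<ge> 0" "\<forall>t\<ge>0. \<bar>w t\<bar> \<le> Wm" using w_bound by blast
  obtain Tm where Tm: "Tm \<ge> 0" "\<forall>t\<ge>0. \<bar>Th t\<bar> \<le> Tm" using Th_bound by blast
  define c where "c = b2 * (1 - a2 - d2)"
  have c: "c > 0" unfolding c_def using a pos by simp
  define \<epsilon> where "\<epsilon> = min 1 (c / (4 * b2 * (1 + a2 + d2)))"
  have \<epsilon>: "\<epsilon> > 0" "\<epsilon> \<le> 1" unfolding \<epsilon>_def using c pos by (auto intro!: divide_pos_pos add_pos_pos)
  have \<epsilon>b: "b2 * (\<epsilon> + a2 * \<epsilon> + d2 * \<epsilon>) < c / 2"
  proof -
    have "\<epsilon> \<le> c / (4 * b2 * (1 + a2 + d2))" unfolding \<epsilon>_def by simp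
    moreover have D: "4 * b2 * (1 + a2 + d2) > 0" using pos by simp
    ultimately have "\<epsilon> * (4 * b2 * (1 + a2 + d2)) \<le> c" using pos_le_divide_eq[OF D] by blast
    then have "b2 * (\<epsilon> + a2 * \<epsilon> + d2 * \<epsilon>) \<le> c / 4" by (simp add: algebra_simps)
    then show ?thesis using c by simp
  qed
  define C where "C = exp (- 2 * b2 * d2 * Tm) / 2"
  have C: "C > 0" unfolding C_def by simp
  have main: "fst (snd (x t)) \<ge> fst (snd (x 0)) * C * exp (c / 2 * t)"
    if sol: "solves_on F x {0..T}" and v0: "fst (snd (x 0)) > 0" and nb: "\<forall>s\<in>{0..T}. norm (x s - p s) \<le> \<epsilon>"
      and t: "t \<in> {0..T}" for x T t
  proof -
    define x1 where "x1 s = fst (x s)" for s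
    define x2 where "x2 s = fst (snd (x s))" for s
    define x3 where "x3 s = fst (snd (snd (x s)))" for s
    define x4 where "x4 s = snd (snd (snd (x s)))" for s
    have xmp: "x s - p s = (x1 s - 1, x2 s, x3 s, x4 s - w s)" for s
      unfolding x1_def x2_def x3_def x4_def by (rule x_minus_p)
    define B where "B s = (x2 0 / 2) * exp (c / 2 * s + b2 * d2 * (Th s - Th 0))" for s
    have Bpos: "B s > 0" for s unfolding B_def using v0 x2_def by simp
    define \<phi> where "\<phi> (j::nat) s = B s - x2 s" for j s
    define \<phi>' where "\<phi>' (j::nat) s = B s * (c / 2 + b2 * d2 * (1 - w s)) - b2 * x2 s * (1 - x2 s - a2 * x1 s - d2 * x4 s)" for j s
    have T0: "0 \<le> T" using t by auto
    have neg: "\<forall>j\<in>{0}. \<forall>s\<in>{0..T}. \<phi> j s < 0"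
    proof (rule barrier[OF _ T0])
      show "finite {0::nat}" by simp
      fix j s assume j: "j \<in> {0::nat}" and s: "s \<in> {0..T}"
      have dx: "(x2 has_real_derivative b2 * x2 s * (1 - x2 s - a2 * x1 s - d2 * x4 s)) (at s within {0..T})"
        using sol_derivs(2)[OF sol s] unfolding x1_def x2_def x3_def x4_def by (auto simp: fun_eq_iff)
      have dTh: "(Th has_real_derivative 1 - w s) (at s within {0..T})" by (rule Th_deriv[OF order_refl s])
      have dB: "(B has_real_derivative B s * (c / 2 + b2 * d2 * (1 - w s))) (at s within {0..T})"
        unfolding B_def by (auto intro!: derivative_eq_intros dTh)
      show "(\<phi> j has_real_derivative \<phi>' j s) (at s within {0..T})"
        unfolding \<phi>_def \<phi>'_def by (rule DERIV_diff[OF dB dx])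
    next
      fix j :: nat assume "j \<in> {0}"
      show "\<phi> j 0 < 0" unfolding \<phi>_def B_def using v0 x2_def by simp
    next
      fix j s assume j: "j \<in> {0::nat}" and s: "s \<in> {0..T}" and all: "\<forall>k\<in>{0}. \<phi> k s \<le> 0" and z: "\<phi> j s = 0"
      have n: "norm (x1 s - 1, x2 s, x3 s, x4 s - w s) \<le> \<epsilon>" using nb s xmp by metis
      note nb4 = norm4_ge[where a="x1 s - 1" and b="x2 s" and c="x3 s" and d="x4 s - w s"]
      have b: "\<bar>x1 s - 1\<bar> \<le> \<epsilon>" "\<bar>x2 s\<bar> \<le> \<epsilon>" "\<bar>x4 s - w s\<bar> \<le> \<epsilon>"
        using nb4(1) n apply linarith using nb4(2) n apply linarith using nb4(4) n by linarith
      have "x2 s = B s" using z unfolding \<phi>_def by simp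
      then show "\<phi>' j s < 0" unfolding \<phi>'_def
        by (intro cross_u[where Y = \<epsilon> and Ae = \<epsilon> and Af = \<epsilon>]) (use Bpos pos b \<epsilon>b c_def in auto)
    qed
    then have "B t < x2 t" using t unfolding \<phi>_def by auto
    moreover have "x2 0 * C * exp (c / 2 * t) \<le> B t"
    proof -
      have "\<bar>Th t\<bar> \<le> Tm" "\<bar>Th 0\<bar> \<le> Tm" using Tm t by auto
      then have "- 2 * Tm \<le> Th t - Th 0" by linarith
      then have "b2 * d2 * (- 2 * Tm) \<le> b2 * d2 * (Th t - Th 0)" using pos by (intro mult_left_mono) auto
      then have "exp (c / 2 * t + - 2 * b2 * d2 * Tm) \<le> exp (c / 2 * t + b2 * d2 * (Th t - Th 0))" by simp
      then have "(x2 0 / 2) * exp (c / 2 * t + - 2 * b2 * d2 * Tm) \<le> (x2 0 / 2) * exp (c / 2 * t + b2 * d2 * (Th t - Th 0))"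
        using v0 x2_def by (intro mult_left_mono) auto
      moreover have "(x2 0 / 2) * exp (c / 2 * t + - 2 * b2 * d2 * Tm) = x2 0 * C * exp (c / 2 * t)"
      proof -
        have "exp (c / 2 * t + - 2 * b2 * d2 * Tm) = exp (- 2 * b2 * d2 * Tm) * exp (c / 2 * t)"
          using exp_add[of "c / 2 * t" "- 2 * b2 * d2 * Tm"] by (simp only: mult.commute)
        then show ?thesis unfolding C_def by simp
      qed
      ultimately show ?thesis unfolding B_def by linarith
    qed
    ultimately show ?thesis unfolding x2_def by simp
  qed
  have "c / 2 > 0" using c by simp
  then show ?thesis using \<epsilon> C main by blast
qed

end


context sys begin

lemma trunc_to_F:
  assumes "solves_on (\<lambda>t u. F t (cl4 Kb u)) X {t0..}" "\<forall>s\<in>S. cl4 Kb (X s) = X s" "S \<subseteq> {t0..}"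
  shows "solves_on F X S"
  unfolding solves_on_def
proof
  fix s assume s: "s \<in> S"
  have "(X has_vector_derivative F s (cl4 Kb (X s))) (at s within {t0..})"
    using assms(1,3) s unfolding solves_on_def by auto
  then have "(X has_vector_derivative F s (cl4 Kb (X s))) (at s within S)"
    using has_vector_derivative_within_subset assms(3) by blast
  then show "(X has_vector_derivative F s (X s)) (at s within S)" using assms(2) s by simp
qed

lemma sol_cont:
  assumes "solves_on G X {t0..}" "0 \<le> t0"
  shows "continuous_on {t0..} (\<lambda>s. norm (X s - p s))"
proof -
  have "continuous_on {t0..} X"
    using assms(1) unfolding solves_on_def
    by (meson continuous_on_eq_continuous_within has_vector_derivative_continuous)
  moreover have "continuous_on {t0..} p" using continuous_on_subset[OF p_cont] assms(2) by auto
  ultimately show ?thesis by (intro continuous_intros)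
qed

lemma x2_le_norm: "\<bar>fst (snd (x t))\<bar> \<le> norm (x t - p t)"
  unfolding x_minus_p by (rule norm4_ge)

lemma part1: "solves_on F p {0..}"
  unfolding solves_on_def
proof
  fix t :: real assume t: "t \<in> {0..}"
  have "(w has_real_derivative b4 * (i t - w t)) (at t within {0..})" using w_ode t by auto
  then have dw: "(w has_vector_derivative b4 * (i t - w t)) (at t within {0..})"
    by (simp add: has_real_derivative_iff_has_vector_derivative)
  have "F t (p t) = (0, 0, 0, b4 * (i t - w t))" unfolding p_def sysF_simp by simp
  moreover have "(p has_vector_derivative (0, 0, 0, b4 * (i t - w t))) (at t within {0..})"
    unfolding p_def by (intro has_vector_derivative_Pair has_vector_derivative_const dw)
  ultimately show "(p has_vector_derivative F t (p t)) (at t within {0..})" by simp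
qed

lemma part3:
  assumes a: "a2 + d2 > 1"
  shows "unif_asym_stable F p"
proof -
  obtain Wm where Wm: "Wm \<ge> 0" "\<forall>t\<ge>0. \<bar>w t\<bar> \<le> Wm" using w_bound by blast
  define Kb where "Kb = Wm + 2"
  have Kb: "0 \<le> Kb" unfolding Kb_def using Wm by simp
  obtain \<eta>0 K \<mu> where \<eta>0: "\<eta>0 > 0" and K: "K > 0" and \<mu>: "\<mu> > 0" and
    est: "\<And>\<eta> t0 T x t. 0 < \<eta> \<Longrightarrow> \<eta> \<le> \<eta>0 \<Longrightarrow> 0 \<le> t0 \<Longrightarrow> solves_on F x {t0..T} \<Longrightarrow>
      norm (x t0 - p t0) < \<eta> \<Longrightarrow> t \<in> {t0..T} \<Longrightarrow> norm (x t - p t) \<le> K * \<eta> * exp (- \<mu> * (t - t0))"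
    using stable_est[OF a] by blast
  have est1: "norm (x t - p t) \<le> K * \<eta>"
    if "0 < \<eta>" "\<eta> \<le> \<eta>0" "0 \<le> t0" "solves_on F x {t0..T}" "norm (x t0 - p t0) < \<eta>" "t \<in> {t0..T}" for \<eta> t0 T x t
  proof -
    have "exp (- \<mu> * (t - t0)) \<le> 1" using that(6) \<mu> by simp
    then have "K * \<eta> * exp (- \<mu> * (t - t0)) \<le> K * \<eta>" using K that(1) by (simp add: mult_left_le)
    then show ?thesis using est[OF that] by linarith
  qed
  define \<eta>1 where "\<eta>1 = min \<eta>0 (min (1 / (2 * K)) (1/2))"
  have \<eta>1: "\<eta>1 > 0" "\<eta>1 \<le> \<eta>0" "K * \<eta>1 \<le> 1/2" "\<eta>1 \<le> 1/2"
  proof -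
    show "\<eta>1 > 0" "\<eta>1 \<le> \<eta>0" "\<eta>1 \<le> 1/2" unfolding \<eta>1_def using \<eta>0 K by auto
    have "\<eta>1 \<le> 1 / (2 * K)" unfolding \<eta>1_def by auto
    then show "K * \<eta>1 \<le> 1/2" using K by (simp add: field_simps)
  qed
  have exist: "\<exists>x. x t0 = x0 \<and> solves_on F x {t0..}"
    if t0: "0 \<le> t0" and \<delta>: "0 < \<delta>" "\<delta> \<le> \<eta>1" and x0: "norm (x0 - p t0) < \<delta>" for t0 \<delta> x0
  proof -
    obtain X where X0: "X t0 = x0" and XG: "solves_on (\<lambda>t u. F t (cl4 Kb u)) X {t0..}"
      using exists_trunc[OF Kb t0] by blast
    define g where "g s = norm (X s - p s)" for s
    have gc: "continuous_on {t0..} g" unfolding g_def by (rule sol_cont[OF XG t0])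
    have boxed: "cl4 Kb (X s) = X s" if "g s \<le> 1" "s \<ge> t0" for s
      unfolding Kb_def by (rule box) (use that Wm t0 g_def in auto)
    have all: "\<forall>s\<ge>t0. g s < 1"
    proof (rule ccontr)
      assume "\<not> (\<forall>s\<ge>t0. g s < 1)"
      then obtain t1 where t1: "t1 \<ge> t0" "g t1 \<ge> 1" by auto
      have g0: "g t0 < 1" unfolding g_def using X0 x0 \<delta> \<eta>1 by simp
      obtain T where T: "t0 < T" "T \<le> t1" "g T = 1" "\<forall>s\<in>{t0..<T}. g s < 1"
        using first_exit[OF gc g0 t1] by blast
      have "\<forall>s\<in>{t0..T}. cl4 Kb (X s) = X s"
      proof
        fix s assume s: "s \<in> {t0..T}"
        have "g s \<le> 1"
        proof (cases "s = T")
          case True then show ?thesis using T by simp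
        next
          case False then have "s \<in> {t0..<T}" using s by auto
          then show ?thesis using T(4) by (auto intro: less_imp_le)
        qed
        then show "cl4 Kb (X s) = X s" using boxed s by auto
      qed
      then have "solves_on F X {t0..T}" by (intro trunc_to_F[OF XG]) auto
      then have "g T \<le> K * \<delta>" unfolding g_def
        using est1[of \<delta> t0 X T T] \<delta> \<eta>1 t0 X0 x0 T by auto
      also have "\<dots> \<le> K * \<eta>1" using \<delta> K by simp
      finally show False using T \<eta>1 by simp
    qed
    have "solves_on F X {t0..}"
      by (rule trunc_to_F[OF XG]) (use all boxed in \<open>auto intro: less_imp_le\<close>)
    then show ?thesis using X0 by blast
  qed
  have stab: "unif_stable F p"
    unfolding unif_stable_def
  proof (intro allI impI)
    fix \<epsilon> :: real assume \<epsilon>: "\<epsilon> > 0"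
    define \<delta> where "\<delta> = min \<eta>1 (\<epsilon> / (2 * K))"
    have \<delta>: "\<delta> > 0" "\<delta> \<le> \<eta>1" "K * \<delta> < \<epsilon>"
    proof -
      show "\<delta> > 0" "\<delta> \<le> \<eta>1" unfolding \<delta>_def using \<eta>1 \<epsilon> K by auto
      have "\<delta> \<le> \<epsilon> / (2 * K)" unfolding \<delta>_def by auto
      then have "K * \<delta> \<le> \<epsilon> / 2" using K by (simp add: field_simps)
      then show "K * \<delta> < \<epsilon>" using \<epsilon> by simp
    qed
    show "\<exists>\<delta>>0. \<forall>t0\<ge>0. (\<forall>x0. norm (x0 - p t0) < \<delta> \<longrightarrow> (\<exists>x. x t0 = x0 \<and> solves_on F x {t0..})) \<and>
         (\<forall>x T. solves_on F x {t0..T} \<and> norm (x t0 - p t0) < \<delta> \<longrightarrow> (\<forall>t\<in>{t0..T}. norm (x t - p t) < \<epsilon>))"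
    proof (intro exI[of _ \<delta>] conjI allI impI ballI)
      show "\<delta> > 0" using \<delta> by simp
      fix t0 :: real assume t0: "0 \<le> t0"
      {
        fix x0 assume "norm (x0 - p t0) < \<delta>"
        then show "\<exists>x. x t0 = x0 \<and> solves_on F x {t0..}" using exist[OF t0 \<delta>(1,2)] by blast
      }
      {
        fix x T t assume h: "solves_on F x {t0..T} \<and> norm (x t0 - p t0) < \<delta>" and t: "t \<in> {t0..T}"
        have "norm (x t - p t) \<le> K * \<delta>" using est1[of \<delta> t0 x T t] h t t0 \<delta> \<eta>1 by auto
        then show "norm (x t - p t) < \<epsilon>" using \<delta> by simp
      }
    qed
  qed
  have attr: "\<exists>\<delta>0>0. \<forall>\<epsilon>>0. \<exists>T>0. \<forall>t0\<ge>0. \<forall>x. solves_on F x {t0..} \<and> norm (x t0 - p t0) < \<delta>0 \<longrightarrow>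
       (\<forall>t\<ge>t0 + T. norm (x t - p t) < \<epsilon>)"
  proof (rule exI[of _ \<eta>1], intro conjI allI impI)
    show "\<eta>1 > 0" using \<eta>1 by simp
    fix \<epsilon> :: real assume \<epsilon>: "\<epsilon> > 0"
    define L where "L = ln (\<epsilon> / (K * \<eta>1))"
    define T where "T = (\<bar>L\<bar> + 1) / \<mu>"
    have T: "T > 0" unfolding T_def using \<mu> by simp
    have "\<forall>t0\<ge>0. \<forall>x. solves_on F x {t0..} \<and> norm (x t0 - p t0) < \<eta>1 \<longrightarrow> (\<forall>t\<ge>t0 + T. norm (x t - p t) < \<epsilon>)"
    proof (intro allI impI)
      fix t0 x t assume t0: "0 \<le> t0" and h: "solves_on F x {t0..} \<and> norm (x t0 - p t0) < \<eta>1" and t: "t0 + T \<le> t"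
      have sol: "solves_on F x {t0..t}" unfolding solves_on_def
      proof
        fix s assume s: "s \<in> {t0..t}"
        then have "(x has_vector_derivative F s (x s)) (at s within {t0..})" using h unfolding solves_on_def by auto
        then show "(x has_vector_derivative F s (x s)) (at s within {t0..t})"
          by (rule has_vector_derivative_within_subset) auto
      qed
      have n: "norm (x t - p t) \<le> K * \<eta>1 * exp (- \<mu> * (t - t0))"
        using est[OF \<eta>1(1) \<eta>1(2) t0 sol] h t T by auto
      have "- \<mu> * (t - t0) \<le> - \<mu> * T" using t \<mu> by simp
      also have "- \<mu> * T = - \<bar>L\<bar> - 1" unfolding T_def using \<mu> by simp
      also have "\<dots> < L" by simp
      finally have "exp (- \<mu> * (t - t0)) < exp L" by simp
      also have "exp L = \<epsilon> / (K * \<eta>1)" unfolding L_def using \<epsilon> K \<eta>1 by simp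
      finally have ee: "exp (- \<mu> * (t - t0)) < \<epsilon> / (K * \<eta>1)" .
      have "K * \<eta>1 * exp (- \<mu> * (t - t0)) < K * \<eta>1 * (\<epsilon> / (K * \<eta>1))"
        by (rule mult_strict_left_mono[OF ee]) (use K \<eta>1 in auto)
      also have "\<dots> = \<epsilon>" using K \<eta>1 by simp
      finally show "norm (x t - p t) < \<epsilon>" using n by linarith
    qed
    then show "\<exists>T>0. \<forall>t0\<ge>0. \<forall>x. solves_on F x {t0..} \<and> norm (x t0 - p t0) < \<eta>1 \<longrightarrow> (\<forall>t\<ge>t0 + T. norm (x t - p t) < \<epsilon>)"
      using T by blast
  qed
  show ?thesis unfolding unif_asym_stable_def using stab attr by blast
qed

lemma part4:
  assumes a: "a2 + d2 < 1"
  shows "lyap_unstable F p"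
proof -
  obtain Wm where Wm: "Wm \<ge> 0" "\<forall>t\<ge>0. \<bar>w t\<bar> \<le> Wm" using w_bound by blast
  define Kb where "Kb = Wm + 2"
  have Kb: "0 \<le> Kb" unfolding Kb_def using Wm by simp
  obtain \<epsilon> \<kappa> C where \<epsilon>: "\<epsilon> > 0" "\<epsilon> \<le> 1" and \<kappa>: "\<kappa> > 0" and C: "C > 0" and
    est: "\<And>x T t. solves_on F x {0..T} \<Longrightarrow> fst (snd (x 0)) > 0 \<Longrightarrow>
      (\<forall>s\<in>{0..T}. norm (x s - p s) \<le> \<epsilon>) \<Longrightarrow> t \<in> {0..T} \<Longrightarrow> fst (snd (x t)) \<ge> fst (snd (x 0)) * C * exp (\<kappa> * t)"
    using unstable_est[OF a] by blast
  have "\<forall>\<delta>>0. \<exists>x T. solves_on F x {0..T} \<and> norm (x 0 - p 0) < \<delta> \<and> (\<exists>t\<in>{0..T}. \<epsilon> \<le> norm (x t - p t))"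
  proof (intro allI impI)
    fix \<delta> :: real assume \<delta>: "\<delta> > 0"
    define v0 where "v0 = min (\<delta> / 2) (\<epsilon> / 2)"
    have v0: "v0 > 0" "v0 < \<delta>" "v0 < \<epsilon>" unfolding v0_def using \<delta> \<epsilon> by auto
    define x0 where "x0 = (1::real, v0, 0::real, w 0)"
    have nx0: "norm (x0 - p 0) < \<delta>"
    proof -
      have "x0 - p 0 = (0, v0, 0, 0)" unfolding x0_def p_def by (simp add: zero_prod_def)
      moreover have "norm ((0::real), v0, (0::real), (0::real)) \<le> \<bar>0\<bar> + \<bar>v0\<bar> + \<bar>0\<bar> + \<bar>0\<bar>" by (rule norm4_le)
      ultimately show ?thesis using v0 by simp
    qed
    obtain X where X0: "X 0 = x0" and XG: "solves_on (\<lambda>t u. F t (cl4 Kb u)) X {0..}"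
      using exists_trunc[OF Kb order_refl] by blast
    define g where "g s = norm (X s - p s)" for s
    have gc: "continuous_on {0..} g" unfolding g_def by (rule sol_cont[OF XG order_refl])
    have boxed: "cl4 Kb (X s) = X s" if "g s \<le> 1" "s \<ge> 0" for s
      unfolding Kb_def by (rule box) (use that Wm g_def in auto)
    have g0: "g 0 < \<epsilon>"
    proof -
      have "x0 - p 0 = (0, v0, 0, 0)" unfolding x0_def p_def by (simp add: zero_prod_def)
      moreover have "norm ((0::real), v0, (0::real), (0::real)) \<le> \<bar>0\<bar> + \<bar>v0\<bar> + \<bar>0\<bar> + \<bar>0\<bar>" by (rule norm4_le)
      ultimately show ?thesis unfolding g_def using X0 v0 by simp
    qed
    have X20: "fst (snd (X 0)) = v0" using X0 unfolding x0_def by simp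
    have ex: "\<exists>t1\<ge>0. g t1 \<ge> \<epsilon>"
    proof (rule ccontr)
      assume "\<not> (\<exists>t1\<ge>0. g t1 \<ge> \<epsilon>)"
      then have small: "\<forall>s\<ge>0. g s < \<epsilon>" by auto
      define L where "L = ln (\<epsilon> / (v0 * C))"
      define t where "t = \<bar>L\<bar> / \<kappa>"
      have t: "t \<ge> 0" unfolding t_def using \<kappa> by simp
      have "\<forall>s\<in>{0..t}. cl4 Kb (X s) = X s" using small boxed \<epsilon> by (auto intro: less_imp_le order_trans)
      then have sol: "solves_on F X {0..t}" by (intro trunc_to_F[OF XG]) auto
      have nb: "\<forall>s\<in>{0..t}. norm (X s - p s) \<le> \<epsilon>" using small unfolding g_def by (auto intro: less_imp_le)
      have "fst (snd (X t)) \<ge> fst (snd (X 0)) * C * exp (\<kappa> * t)"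
        using est[OF sol _ nb, of t] X20 v0 t by auto
      then have "fst (snd (X t)) \<ge> v0 * C * exp (\<kappa> * t)" using X20 by simp
      moreover have "exp (\<kappa> * t) \<ge> \<epsilon> / (v0 * C)"
      proof -
        have "\<kappa> * t = \<bar>L\<bar>" unfolding t_def using \<kappa> by simp
        then have "exp L \<le> exp (\<kappa> * t)" by simp
        moreover have "exp L = \<epsilon> / (v0 * C)" unfolding L_def using \<epsilon> v0 C by simp
        ultimately show ?thesis by simp
      qed
      then have "v0 * C * exp (\<kappa> * t) \<ge> v0 * C * (\<epsilon> / (v0 * C))" using v0 C by (intro mult_left_mono) auto
      then have "v0 * C * exp (\<kappa> * t) \<ge> \<epsilon>" using v0 C by simp
      moreover have "\<bar>fst (snd (X t))\<bar> \<le> g t" unfolding g_def by (rule x2_le_norm)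
      ultimately show False using small t by fastforce
    qed
    then obtain t1 where t1: "t1 \<ge> 0" "g t1 \<ge> \<epsilon>" by blast
    obtain T where T: "0 < T" "T \<le> t1" "g T = \<epsilon>" "\<forall>s\<in>{0..<T}. g s < \<epsilon>"
      using first_exit[OF gc g0 t1] by blast
    have "\<forall>s\<in>{0..T}. cl4 Kb (X s) = X s"
    proof
      fix s assume s: "s \<in> {0..T}"
      have "g s \<le> \<epsilon>"
      proof (cases "s = T")
        case True then show ?thesis using T by simp
      next
        case False then have "s \<in> {0..<T}" using s by auto
        then show ?thesis using T(4) by (auto intro: less_imp_le)
      qed
      then show "cl4 Kb (X s) = X s" using boxed s \<epsilon> by auto
    qed
    then have "solves_on F X {0..T}" by (intro trunc_to_F[OF XG]) auto
    moreover have "norm (X 0 - p 0) < \<delta>" using X0 nx0 by simp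
    moreover have "\<exists>t\<in>{0..T}. norm (X t - p t) \<ge> \<epsilon>" using T unfolding g_def by (intro bexI[of _ T]) auto
    ultimately show "\<exists>x T. solves_on F x {0..T} \<and> norm (x 0 - p 0) < \<delta> \<and> (\<exists>t\<in>{0..T}. \<epsilon> \<le> norm (x t - p t))"
      by blast
  qed
  then show ?thesis unfolding lyap_unstable_def using \<epsilon>(1) by (intro exI[of _ "0::real"] conjI order_refl exI[of _ \<epsilon>]) auto
qed

end

theorem mainTheorem5:
  fixes a1 a2 b2 b3 b4 d1 d2 d4 \<rho> iM :: real
    and i w :: "real \<Rightarrow> real"
  assumes pos: "a1 > 0" "a2 > 0" "b2 > 0" "b3 > 0" "b4 > 0" "d1 > 0" "d2 > 0" "d4 > 0"
    and rho: "\<rho> > 0"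
    and i_cont: "continuous_on {0..} i"
    and i_range: "\<forall>t\<ge>0. 0 \<le> i t \<and> i t \<le> iM"
    and i_per: "\<forall>t\<ge>0. i (t + \<rho>) = i t"
    and i_mean: "(1 / \<rho>) * integral {0..\<rho>} i = 1"
    and w_ode: "\<forall>t\<ge>0. (w has_real_derivative b4 * (i t - w t)) (at t within {0..})"
    and w_per: "\<forall>t\<ge>0. w (t + \<rho>) = w t"
  shows "solves_on (sysF a1 a2 b2 b3 b4 d1 d2 d4 i) (\<lambda>t. (1, 0, 0, w t)) {0..}
         \<and> (\<forall>t\<ge>0. (\<lambda>t. (1::real, 0::real, 0::real, w t)) (t + \<rho>) = (1, 0, 0, w t))
         \<and> (a2 + d2 > 1 \<longrightarrow> unif_asym_stable (sysF a1 a2 b2 b3 b4 d1 d2 d4 i) (\<lambda>t. (1, 0, 0, w t)))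
         \<and> (a2 + d2 < 1 \<longrightarrow> lyap_unstable (sysF a1 a2 b2 b3 b4 d1 d2 d4 i) (\<lambda>t. (1, 0, 0, w t)))"
proof -
  interpret sys a1 a2 b2 b3 b4 d1 d2 d4 \<rho> iM i w
    by unfold_locales (use pos rho i_cont i_range i_per i_mean w_ode w_per in auto)
  have pe: "(\<lambda>t. (1::real, 0::real, 0::real, w t)) = p" by (simp add: fun_eq_iff p_def)
  have c2: "\<forall>t\<ge>0. (\<lambda>t. (1::real, 0::real, 0::real, w t)) (t + \<rho>) = (1, 0, 0, w t)" using w_per by simp
  show ?thesis using part1 part3 part4 c2 unfolding pe by blast
qed

end
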